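(* Let $D^k$ be a vertically mapped wedge with $J^k>0$. Define the weak differentiation matrices $(\bm S^k_x)_{ij,i'j'}=\int_{\widehat W}\frac{\partial\phi_{i'j'}}{\partial x}\,\ell_{ij}\,J^k$ and $(\bm S^k_y)_{ij,i'j'}=\int_{\widehat W}\frac{\partial\phi_{i'j'}}{\partial y}\,\ell_{ij}\,J^k$, where $\phi_{i'j'}=\ell_{i'j'}\circ(\bm\Phi^k)^{-1}$ and the $x$-,$y$-derivatives are expressed via the chain rule in reference coordinates, and let $\bm D^k_x=(\bm M^k)^{-1}\bm S^k_x$, $\bm D^k_y=(\bm M^k)^{-1}\bm S^k_y$. Then $$\bm D^k_x=\big(r_x\bm D^{\mathrm{tri}}_r+s_x\bm D^{\mathrm{tri}}_s\big)\otimes\bm I_{N+1}+\bm L^{\mathrm{tri},k}\otimes\mathrm{diag}(t_xJ^k)\,\bm D^{\mathrm{1D}}_t,$$ $$\bm D^k_y=\big(r_y\bm D^{\mathrm{tri}}_r+s_y\bm D^{\mathrm{tri}}_s\big)\otimes\bm I_{N+1}+\bm L^{\mathrm{tri},k}\otimes\mathrm{diag}(t_yJ^k)\,\bm D^{\mathrm{1D}}_t,$$ where $r_x,s_x,r_y,s_y$ are the (constant) geometric factors of $D^k$, $\mathrm{diag}(t_xJ^k)$ (resp. $\mathrm{diag}(t_yJ^k)$) is the $(N+1)\times(N+1)$ diagonal matrix with entries $(t_xJ^k)(t_j)$ (resp. $(t_yJ^k)(t_j)$), $j=0,\dots,N$ (these quantities depend only on $t$), and $\bm L^{\mathrm{tri},k}=(\bm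 M^{\mathrm{tri},k})^{-1}\widehat{\bm M}^{\mathrm{tri}}$.
   Context: Reference wedge $\widehat W=\widehat T\times[0,1]$ with $\widehat T=\{(r,s):r,s\ge0,\ r+s\le1\}$. Vertex functions $v_1=(1-r-s)(1-t)$, $v_2=r(1-t)$, $v_3=s(1-t)$, $v_4=(1-r-s)t$, $v_5=rt$, $v_6=st$; a wedge $D^k$ is the image of $\widehat W$ under $\bm{\Phi}^k=\sum_{i=1}^6\bm{\nu}_iv_i$ with vertices $\bm{\nu}_i\in\mathbb{R}^3$, $(x,y,z)=\bm\Phi^k(r,s,t)$, and $J^k=\det[\partial_r\bm{\Phi}^k,\partial_s\bm{\Phi}^k,\partial_t\bm{\Phi}^k]$. It is vertically mapped if the pairs $(\bm{\nu}_1,\bm{\nu}_4)$, $(\bm{\nu}_2,\bm{\nu}_5)$, $(\bm{\nu}_3,\bm{\nu}_6)$ each have identical $x$- and $y$-coordinates. Geometric factors $r_x=\partial r/\partial x$, $t_x=\partial t/\partial x$, etc., are entries of the inverse Jacobian matrix of $\bm\Phi^k$. Nodal basis: fix $N\ge1$, points $(r_i,s_i)$, $i=1,\dots,(N+1)(N+2)/2$, in $\widehat T$ unisolvent for polynomials of total degree $\le N$ with Lagrange basis $\ell^{\mathrm{tri}}_i$, and Gauss–Legendre–Lobatto points $0=t_0<\dots<t_N=1$ with Lagrange basis $\ell^{\mathrm{1D}}_j$; $\ell_{ij}=\ell^{\mathrm{tri}}_i(r,s)\ell^{\mathrm{1D}}_j(t)$. Matrices indexed by $(i,j)$ are ordered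 with $i$ the slow index, so $(\bm A\otimes\bm B)_{ij,i'j'}=\bm A_{ii'}\bm B_{jj'}$. Definitions: $(\bm M^k)_{ij,i'j'}=\int_{\widehat W}\ell_{ij}\ell_{i'j'}J^k$; $(\bm M^{\mathrm{tri},k})_{ii'}=\int_{\widehat T}\ell^{\mathrm{tri}}_i\ell^{\mathrm{tri}}_{i'}J^k(r,s)$ (where $J^k$ is independent of $t$ for vertically mapped wedges); $(\widehat{\bm M}^{\mathrm{tri}})_{ii'}=\int_{\widehat T}\ell^{\mathrm{tri}}_i\ell^{\mathrm{tri}}_{i'}$; nodal differentiation matrices $(\bm D^{\mathrm{tri}}_r)_{ii'}=\partial_r\ell^{\mathrm{tri}}_{i'}(r_i,s_i)$, $(\bm D^{\mathrm{tri}}_s)_{ii'}=\partial_s\ell^{\mathrm{tri}}_{i'}(r_i,s_i)$, $(\bm D^{\mathrm{1D}}_t)_{jj'}=(\ell^{\mathrm{1D}}_{j'})'(t_j)$; $\bm I_{N+1}$ is the $(N+1)\times(N+1)$ identity. *)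

theory Defs
  imports "HOL-Analysis.Analysis" "HOL-Computational_Algebra.Polynomial"
begin

definition mmul :: "nat \<Rightarrow> (nat \<Rightarrow> nat \<Rightarrow> real) \<Rightarrow> (nat \<Rightarrow> nat \<Rightarrow> real) \<Rightarrow> nat \<Rightarrow> nat \<Rightarrow> real" where
  "mmul n A B = (\<lambda>a b. \<Sum>c<n. A a c * B c b)"

definition idm :: "nat \<Rightarrow> nat \<Rightarrow> real" where
  "idm a b = (if a = b then 1 else 0)"

definition diagm :: "(nat \<Rightarrow> real) \<Rightarrow> nat \<Rightarrow> nat \<Rightarrow> real" where
  "diagm d a b = (if a = b then d a else 0)"

text \<open>Inverse of an n x n matrix (entries outside the n x n block are set to 0).\<close>
definition minv :: "nat \<Rightarrow> (nat \<Rightarrow> nat \<Rightarrow> real) \<Rightarrow> nat \<Rightarrow> nat \<Rightarrow> real" where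
  "minv n A = (THE B. (\<forall>a b. (n \<le> a \<or> n \<le> b) \<longrightarrow> B a b = 0)
      \<and> (\<forall>a<n. \<forall>b<n. mmul n B A a b = idm a b)
      \<and> (\<forall>a<n. \<forall>b<n. mmul n A B a b = idm a b))"

text \<open>Kronecker product, the second factor being q x q; index (i,j) is flattened as i*q+j
  (i the slow index).\<close>
definition kron :: "nat \<Rightarrow> (nat \<Rightarrow> nat \<Rightarrow> real) \<Rightarrow> (nat \<Rightarrow> nat \<Rightarrow> real) \<Rightarrow> nat \<Rightarrow> nat \<Rightarrow> real" where
  "kron q A B = (\<lambda>a b. A (a div q) (b div q) * B (a mod q) (b mod q))"

definition ref_tri :: "(real \<times> real) set" where
  "ref_tri = {(r, s). 0 \<le> r \<and> 0 \<le> s \<and> r + s \<le> 1}"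

definition ref_wedge :: "(real \<times> real \<times> real) set" where
  "ref_wedge = {(r, s, t). 0 \<le> r \<and> 0 \<le> s \<and> r + s \<le> 1 \<and> 0 \<le> t \<and> t \<le> 1}"

definition Np :: "nat \<Rightarrow> nat" where
  "Np N = (N + 1) * (N + 2) div 2"

definition tri_poly :: "nat \<Rightarrow> (real \<times> real \<Rightarrow> real) set" where
  "tri_poly N = {f. \<exists>c :: nat \<Rightarrow> nat \<Rightarrow> real.
      \<forall>r s. f (r, s) = (\<Sum>a\<le>N. \<Sum>b\<le>N - a. c a b * r ^ a * s ^ b)}"

definition unisolvent :: "nat \<Rightarrow> (nat \<Rightarrow> real \<times> real) \<Rightarrow> bool" where
  "unisolvent N p = (\<forall>d :: nat \<Rightarrow> real.
      \<exists>!f. f \<in> tri_poly N \<and> (\<forall>m<Np N. f (p m) = d m))"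

definition lagr_tri :: "nat \<Rightarrow> (nat \<Rightarrow> real \<times> real) \<Rightarrow> nat \<Rightarrow> real \<times> real \<Rightarrow> real" where
  "lagr_tri N p i = (THE f. f \<in> tri_poly N \<and> (\<forall>m<Np N. f (p m) = (if m = i then 1 else 0)))"

text \<open>Shifted Legendre setting: GLL points on [0,1] are 0, 1 and the roots of the derivative
  of the degree-N Legendre polynomial on [0,1], which is proportional to
  (d/dt)^N (t^2 - t)^N (Rodrigues).\<close>
definition gll_interior_poly :: "nat \<Rightarrow> real poly" where
  "gll_interior_poly N = pderiv ((pderiv ^^ N) ([:0, -1, 1:] ^ N))"

definition gll_nodes :: "nat \<Rightarrow> (nat \<Rightarrow> real) \<Rightarrow> bool" where
  "gll_nodes N t = (t 0 = 0 \<and> t N = 1 \<and> strict_mono_on {0..N} t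
      \<and> (\<forall>j. 0 < j \<and> j < N \<longrightarrow> poly (gll_interior_poly N) (t j) = 0))"

definition lagr_1d :: "nat \<Rightarrow> (nat \<Rightarrow> real) \<Rightarrow> nat \<Rightarrow> real \<Rightarrow> real" where
  "lagr_1d N t j = (\<lambda>x. \<Prod>m\<in>{0..N} - {j}. (x - t m) / (t j - t m))"

definition ell :: "nat \<Rightarrow> (nat \<Rightarrow> real \<times> real) \<Rightarrow> (nat \<Rightarrow> real) \<Rightarrow> nat \<Rightarrow> real \<Rightarrow> real \<Rightarrow> real \<Rightarrow> real" where
  "ell N p t a r s u = lagr_tri N p (a div (N + 1)) (r, s) * lagr_1d N t (a mod (N + 1)) u"

definition pd_r :: "(real \<Rightarrow> real \<Rightarrow> real \<Rightarrow> real) \<Rightarrow> real \<Rightarrow> real \<Rightarrow> real \<Rightarrow> real" where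
  "pd_r f r s t = deriv (\<lambda>x. f x s t) r"
definition pd_s :: "(real \<Rightarrow> real \<Rightarrow> real \<Rightarrow> real) \<Rightarrow> real \<Rightarrow> real \<Rightarrow> real \<Rightarrow> real" where
  "pd_s f r s t = deriv (\<lambda>x. f r x t) s"
definition pd_t :: "(real \<Rightarrow> real \<Rightarrow> real \<Rightarrow> real) \<Rightarrow> real \<Rightarrow> real \<Rightarrow> real \<Rightarrow> real" where
  "pd_t f r s t = deriv (\<lambda>x. f r s x) t"

definition vfun :: "nat \<Rightarrow> real \<Rightarrow> real \<Rightarrow> real \<Rightarrow> real" where
  "vfun i r s t =
     (if i = 1 then (1 - r - s) * (1 - t)
      else if i = 2 then r * (1 - t)
      else if i = 3 then s * (1 - t)
      else if i = 4 then (1 - r - s) * t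
      else if i = 5 then r * t
      else if i = 6 then s * t else 0)"

text \<open>One coordinate of the map Phi, given that coordinate of the six vertices.\<close>
definition Phi_c :: "(nat \<Rightarrow> real) \<Rightarrow> real \<Rightarrow> real \<Rightarrow> real \<Rightarrow> real" where
  "Phi_c c r s t = (\<Sum>i=1..6. c i * vfun i r s t)"

definition vertically_mapped :: "(nat \<Rightarrow> real) \<Rightarrow> (nat \<Rightarrow> real) \<Rightarrow> bool" where
  "vertically_mapped vx vy = (vx 1 = vx 4 \<and> vy 1 = vy 4 \<and> vx 2 = vx 5 \<and> vy 2 = vy 5
      \<and> vx 3 = vx 6 \<and> vy 3 = vy 6)"

definition jac_mat :: "(nat \<Rightarrow> real) \<Rightarrow> (nat \<Rightarrow> real) \<Rightarrow> (nat \<Rightarrow> real) \<Rightarrow> real \<Rightarrow> real \<Rightarrow> real \<Rightarrow> real^3^3" where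
  "jac_mat vx vy vz r s t = vector
     [vector [pd_r (Phi_c vx) r s t, pd_s (Phi_c vx) r s t, pd_t (Phi_c vx) r s t],
      vector [pd_r (Phi_c vy) r s t, pd_s (Phi_c vy) r s t, pd_t (Phi_c vy) r s t],
      vector [pd_r (Phi_c vz) r s t, pd_s (Phi_c vz) r s t, pd_t (Phi_c vz) r s t]]"

definition Jac :: "(nat \<Rightarrow> real) \<Rightarrow> (nat \<Rightarrow> real) \<Rightarrow> (nat \<Rightarrow> real) \<Rightarrow> real \<Rightarrow> real \<Rightarrow> real \<Rightarrow> real" where
  "Jac vx vy vz r s t = det (jac_mat vx vy vz r s t)"

text \<open>Geometric factors = entries of the inverse Jacobian matrix (rows r,s,t; columns x,y,z).\<close>
definition geo_rx where "geo_rx vx vy vz r s t = matrix_inv (jac_mat vx vy vz r s t) $ 1 $ 1"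
definition geo_ry where "geo_ry vx vy vz r s t = matrix_inv (jac_mat vx vy vz r s t) $ 1 $ 2"
definition geo_sx where "geo_sx vx vy vz r s t = matrix_inv (jac_mat vx vy vz r s t) $ 2 $ 1"
definition geo_sy where "geo_sy vx vy vz r s t = matrix_inv (jac_mat vx vy vz r s t) $ 2 $ 2"
definition geo_tx where "geo_tx vx vy vz r s t = matrix_inv (jac_mat vx vy vz r s t) $ 3 $ 1"
definition geo_ty where "geo_ty vx vy vz r s t = matrix_inv (jac_mat vx vy vz r s t) $ 3 $ 2"

definition mass_k where
  "mass_k N p t vx vy vz a b = integral ref_wedge
     (\<lambda>(r, s, u). ell N p t a r s u * ell N p t b r s u * Jac vx vy vz r s u)"

text \<open>J is independent of t for vertically mapped wedges; we evaluate it at t = 0.\<close>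
definition mass_tri_k where
  "mass_tri_k N p vx vy vz i i' = integral ref_tri
     (\<lambda>(r, s). lagr_tri N p i (r, s) * lagr_tri N p i' (r, s) * Jac vx vy vz r s 0)"

definition mass_tri_ref where
  "mass_tri_ref N p i i' = integral ref_tri
     (\<lambda>(r, s). lagr_tri N p i (r, s) * lagr_tri N p i' (r, s))"

definition Dr_tri where
  "Dr_tri N p i i' = deriv (\<lambda>x. lagr_tri N p i' (x, snd (p i))) (fst (p i))"
definition Ds_tri where
  "Ds_tri N p i i' = deriv (\<lambda>x. lagr_tri N p i' (fst (p i), x)) (snd (p i))"
definition Dt_1d where
  "Dt_1d N t j j' = deriv (lagr_1d N t j') (t j)"

definition Sx_k where
  "Sx_k N p t vx vy vz a b = integral ref_wedge
     (\<lambda>(r, s, u). (geo_rx vx vy vz r s u * pd_r (ell N p t b) r s u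
                 + geo_sx vx vy vz r s u * pd_s (ell N p t b) r s u
                 + geo_tx vx vy vz r s u * pd_t (ell N p t b) r s u)
                * ell N p t a r s u * Jac vx vy vz r s u)"

definition Sy_k where
  "Sy_k N p t vx vy vz a b = integral ref_wedge
     (\<lambda>(r, s, u). (geo_ry vx vy vz r s u * pd_r (ell N p t b) r s u
                 + geo_sy vx vy vz r s u * pd_s (ell N p t b) r s u
                 + geo_ty vx vy vz r s u * pd_t (ell N p t b) r s u)
                * ell N p t a r s u * Jac vx vy vz r s u)"

end

theory Submission
  imports Defs "Jordan_Normal_Form.Determinant"
begin

lemma matrix_inv_eqI:
  fixes A :: "real^'n^'n"
  assumes "A ** B = Finite_Cartesian_Product.mat 1" "B ** A = Finite_Cartesian_Product.mat 1"
  shows "matrix_inv A = B"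
proof -
  have ex: "\<exists>A'. A ** A' = Finite_Cartesian_Product.mat 1 \<and> A' ** A = Finite_Cartesian_Product.mat 1" using assms by blast
  define C where "C = matrix_inv A"
  have C: "A ** C = Finite_Cartesian_Product.mat 1 \<and> C ** A = Finite_Cartesian_Product.mat 1"
    unfolding C_def matrix_inv_def using someI_ex[OF ex] by blast
  have "C = C ** (A ** B)" using assms by (simp add: matrix_mul_rid)
  also have "\<dots> = (C ** A) ** B" by (simp add: matrix_mul_assoc)
  also have "\<dots> = B" using C by (simp add: matrix_mul_lid)
  finally show ?thesis unfolding C_def .
qed

lemma inv3:
  fixes a b c d e f g D :: real
  assumes DD: "D = a*d - b*c" and D: "D \<noteq> 0" and G: "g \<noteq> 0"
  shows "matrix_inv (vector [vector [a,b,0], vector [c,d,0], vector [e,f,g]] :: real^3^3)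
    = vector [vector [d/D, -b/D, 0], vector [-c/D, a/D, 0],
              vector [(c*f-d*e)/(D*g), (b*e-a*f)/(D*g), 1/g]]"
  apply (rule matrix_inv_eqI)
  using D G apply (auto simp: matrix_matrix_mult_def vec_eq_iff fun_eq_iff forall_3 sum_3 Finite_Cartesian_Product.mat_def field_simps)
  by (simp_all add: DD algebra_simps)


lemma Phi_c_eq: "Phi_c c r s t = c 1 * ((1 - r - s) * (1 - t)) + c 2 * (r * (1 - t)) + c 3 * (s * (1 - t))
   + c 4 * ((1 - r - s) * t) + c 5 * (r * t) + c 6 * (s * t)"
  by (simp add: Phi_c_def vfun_def eval_nat_numeral atLeastAtMostSuc_conv)

lemma pd_r_Phi: "pd_r (Phi_c c) r s t = (c 2 - c 1) * (1 - t) + (c 5 - c 4) * t"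
  unfolding pd_r_def Phi_c_eq
  by (rule DERIV_imp_deriv) (auto intro!: derivative_eq_intros simp: algebra_simps)

lemma pd_s_Phi: "pd_s (Phi_c c) r s t = (c 3 - c 1) * (1 - t) + (c 6 - c 4) * t"
  unfolding pd_s_def Phi_c_eq
  by (rule DERIV_imp_deriv) (auto intro!: derivative_eq_intros simp: algebra_simps)

lemma pd_t_Phi: "pd_t (Phi_c c) r s t = (c 4 - c 1) * (1 - r - s) + (c 5 - c 2) * r + (c 6 - c 3) * s"
  unfolding pd_t_def Phi_c_eq
  by (rule DERIV_imp_deriv) (auto intro!: derivative_eq_intros simp: algebra_simps)

definition "zr vz u = (vz 2 - vz 1) * (1 - u) + (vz 5 - vz 4) * u"
definition "zs vz u = (vz 3 - vz 1) * (1 - u) + (vz 6 - vz 4) * u"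
definition "zt vz r s = (vz 4 - vz 1) * (1 - r - s) + (vz 5 - vz 2) * r + (vz 6 - vz 3) * s"
definition "Dxy vx vy = (vx 2 - vx 1) * (vy 3 - vy 1) - (vx 3 - vx 1) * (vy 2 - vy 1)"

lemma jac_vm:
  assumes "vertically_mapped vx vy"
  shows "jac_mat vx vy vz r s t = vector [vector [vx 2 - vx 1, vx 3 - vx 1, 0],
     vector [vy 2 - vy 1, vy 3 - vy 1, 0], vector [zr vz t, zs vz t, zt vz r s]]"
  using assms unfolding jac_mat_def pd_r_Phi pd_s_Phi pd_t_Phi vertically_mapped_def zr_def zs_def zt_def
  by (simp add: algebra_simps)

lemma Jac_vm:
  assumes "vertically_mapped vx vy"
  shows "Jac vx vy vz r s t = Dxy vx vy * zt vz r s"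
  unfolding Jac_def jac_vm[OF assms] det_3 Dxy_def by (simp add: algebra_simps)

lemma geo_vm:
  assumes vm: "vertically_mapped vx vy" and D: "Dxy vx vy \<noteq> 0" and G: "zt vz r s \<noteq> 0"
  shows "geo_rx vx vy vz r s t = (vy 3 - vy 1) / Dxy vx vy"
    "geo_ry vx vy vz r s t = - (vx 3 - vx 1) / Dxy vx vy"
    "geo_sx vx vy vz r s t = - (vy 2 - vy 1) / Dxy vx vy"
    "geo_sy vx vy vz r s t = (vx 2 - vx 1) / Dxy vx vy"
    "geo_tx vx vy vz r s t * Jac vx vy vz r s t = (vy 2 - vy 1) * zs vz t - (vy 3 - vy 1) * zr vz t"
    "geo_ty vx vy vz r s t * Jac vx vy vz r s t = (vx 3 - vx 1) * zr vz t - (vx 2 - vx 1) * zs vz t"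
  using D G unfolding geo_rx_def geo_ry_def geo_sx_def geo_sy_def geo_tx_def geo_ty_def Jac_vm[OF vm]
    jac_vm[OF vm] inv3[OF Dxy_def[of vx vy, unfolded D] D G]
  by (simp_all add: Dxy_def)

definition tpc :: "nat \<Rightarrow> (real \<times> real \<Rightarrow> real) \<Rightarrow> (nat \<Rightarrow> nat \<Rightarrow> real) \<Rightarrow> bool" where
  "tpc N f c \<longleftrightarrow> (\<forall>a b. N < a + b \<longrightarrow> c a b = 0) \<and>
     (\<forall>r s. f (r, s) = (\<Sum>a\<le>N. \<Sum>b\<le>N. c a b * r ^ a * s ^ b))"

lemma tri_poly_iff: "f \<in> tri_poly N \<longleftrightarrow> (\<exists>c. tpc N f c)"
proof
  assume "f \<in> tri_poly N"
  then obtain c where c: "\<And>r s. f (r, s) = (\<Sum>a\<le>N. \<Sum>b\<le>N - a. c a b * r ^ a * s ^ b)"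
    unfolding tri_poly_def by blast
  define c' where "c' a b = (if a + b \<le> N then c a b else 0)" for a b
  have "(\<Sum>b\<le>N - a. c a b * r ^ a * s ^ b) = (\<Sum>b\<le>N. c' a b * r ^ a * s ^ b)" if "a \<le> N" for a r s
  proof -
    have "(\<Sum>b\<le>N. c' a b * r ^ a * s ^ b) = (\<Sum>b\<le>N - a. c' a b * r ^ a * s ^ b)"
      by (rule sum.mono_neutral_right) (auto simp: c'_def)
    also have "\<dots> = (\<Sum>b\<le>N - a. c a b * r ^ a * s ^ b)"
      using that by (intro sum.cong) (auto simp: c'_def)
    finally show ?thesis by simp
  qed
  then have "tpc N f c'" unfolding tpc_def using c by (auto simp: c'_def intro!: sum.cong)
  then show "\<exists>c. tpc N f c" by blast
next
  assume "\<exists>c. tpc N f c"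
  then obtain c where c: "tpc N f c" by blast
  have "(\<Sum>b\<le>N - a. c a b * r ^ a * s ^ b) = (\<Sum>b\<le>N. c a b * r ^ a * s ^ b)" if "a \<le> N" for a r s
    by (rule sum.mono_neutral_left) (use c in \<open>auto simp: tpc_def\<close>)
  then have "f (r, s) = (\<Sum>a\<le>N. \<Sum>b\<le>N - a. c a b * r ^ a * s ^ b)" for r s
    using c unfolding tpc_def by (auto intro!: sum.cong)
  then show "f \<in> tri_poly N" unfolding tri_poly_def by blast
qed

lemma tpc_zero: "tpc N (\<lambda>x. 0) (\<lambda>a b. 0)" by (simp add: tpc_def)

lemma tpc_lin: "tpc N f c \<Longrightarrow> tpc N g d \<Longrightarrow> tpc N (\<lambda>x. \<alpha> * f x + g x) (\<lambda>a b. \<alpha> * c a b + d a b)"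
  unfolding tpc_def by (simp add: sum.distrib sum_distrib_left algebra_simps)

lemma tri_poly_lin: "f \<in> tri_poly N \<Longrightarrow> g \<in> tri_poly N \<Longrightarrow> (\<lambda>x. \<alpha> * f x + g x) \<in> tri_poly N"
  unfolding tri_poly_iff using tpc_lin by blast

lemma tri_poly_zero: "(\<lambda>x. 0) \<in> tri_poly N"
  unfolding tri_poly_iff using tpc_zero by blast

lemma tri_poly_sum:
  assumes "finite I" "\<And>i. i \<in> I \<Longrightarrow> f i \<in> tri_poly N"
  shows "(\<lambda>x. \<Sum>i\<in>I. w i * f i x) \<in> tri_poly N"
  using assms
proof (induction I rule: finite_induct)
  case empty then show ?case by (simp add: tri_poly_zero)
next
  case (insert i I)
  then show ?case using tri_poly_lin[of "f i" N "\<lambda>x. \<Sum>i\<in>I. w i * f i x" "w i"] by simp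
qed

lemma tri_poly_swap: "f \<in> tri_poly N \<Longrightarrow> (\<lambda>x. f (snd x, fst x)) \<in> tri_poly N"
  unfolding tri_poly_iff tpc_def
  apply clarify
  subgoal for c
    apply (rule exI[of _ "\<lambda>a b. c b a"])
    apply (auto simp: add.commute)
    apply (subst sum.swap)
    apply (simp add: algebra_simps)
    done
  done

lemma tpc_deriv:
  assumes "tpc N f c"
  shows "tpc N (\<lambda>(x, s). \<Sum>a\<le>N. \<Sum>b\<le>N. c a b * (real a * x ^ (a - 1)) * s ^ b)
     (\<lambda>a b. real (Suc a) * c (Suc a) b)"
proof -
  have c0: "\<And>a b. N < a + b \<Longrightarrow> c a b = 0" using assms by (simp add: tpc_def)
  have "(\<Sum>a\<le>N. \<Sum>b\<le>N. real (Suc a) * c (Suc a) b * x ^ a * s ^ b)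
      = (\<Sum>a\<le>N. \<Sum>b\<le>N. c a b * (real a * x ^ (a - 1)) * s ^ b)" for x s
  proof -
    define g where "g a = (\<Sum>b\<le>N. c a b * (real a * x ^ (a - 1)) * s ^ b)" for a
    have "(\<Sum>a\<le>Suc N. g a) = g 0 + (\<Sum>a\<le>N. g (Suc a))" by (rule sum.atMost_Suc_shift)
    moreover have "(\<Sum>a\<le>Suc N. g a) = (\<Sum>a\<le>N. g a) + g (Suc N)" by simp
    moreover have "g 0 = 0" by (simp add: g_def)
    moreover have "g (Suc N) = 0" by (simp add: g_def c0)
    ultimately have "(\<Sum>a\<le>N. g (Suc a)) = (\<Sum>a\<le>N. g a)" by simp
    then show ?thesis by (simp add: g_def algebra_simps)
  qed
  then show ?thesis using c0 by (auto simp: tpc_def)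
qed

lemma tpc_has_deriv:
  assumes "tpc N f c"
  shows "((\<lambda>x. f (x, s)) has_real_derivative
      (\<Sum>a\<le>N. \<Sum>b\<le>N. c a b * (real a * x ^ (a - 1)) * s ^ b)) (at x)"
proof -
  have f: "(\<lambda>x. f (x, s)) = (\<lambda>x. \<Sum>a\<le>N. \<Sum>b\<le>N. c a b * x ^ a * s ^ b)"
    using assms by (simp add: tpc_def)
  show ?thesis unfolding f
    by (auto intro!: derivative_eq_intros sum.cong simp: mult_ac)
qed

lemma tri_poly_deriv_r:
  assumes "f \<in> tri_poly N"
  obtains f' where "f' \<in> tri_poly N" "\<And>x s. ((\<lambda>x. f (x, s)) has_real_derivative f' (x, s)) (at x)"
proof -
  obtain c where c: "tpc N f c" using assms tri_poly_iff by blast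
  show ?thesis
    apply (rule that[of "\<lambda>(x, s). \<Sum>a\<le>N. \<Sum>b\<le>N. c a b * (real a * x ^ (a - 1)) * s ^ b"])
    using tpc_deriv[OF c] tpc_has_deriv[OF c] tri_poly_iff by auto
qed

lemma tri_poly_deriv_s:
  assumes "f \<in> tri_poly N"
  obtains f' where "f' \<in> tri_poly N" "\<And>r x. ((\<lambda>x. f (r, x)) has_real_derivative f' (r, x)) (at x)"
proof -
  obtain g where g: "g \<in> tri_poly N" "\<And>x s. ((\<lambda>x. f (s, x)) has_real_derivative g (x, s)) (at x)"
    using tri_poly_deriv_r[OF tri_poly_swap[OF assms]] by auto
  show ?thesis
    apply (rule that[of "\<lambda>x. g (snd x, fst x)"])
    using tri_poly_swap[OF g(1)] g(2) by auto
qed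

lemma tri_poly_cont: "f \<in> tri_poly N \<Longrightarrow> continuous_on S f"
proof -
  assume "f \<in> tri_poly N"
  then obtain c where c: "tpc N f c" using tri_poly_iff by blast
  have "f = (\<lambda>x. \<Sum>a\<le>N. \<Sum>b\<le>N. c a b * fst x ^ a * snd x ^ b)"
    using c by (auto simp: tpc_def fun_eq_iff)
  then show ?thesis
    apply (rule ssubst)
    apply (intro continuous_on_sum continuous_on_mult continuous_on_const continuous_on_power continuous_on_fst continuous_on_snd continuous_on_id)
    done
qed

lemma lagr_tri_props:
  assumes "unisolvent N p"
  shows "lagr_tri N p i \<in> tri_poly N" "\<And>m. m < Np N \<Longrightarrow> lagr_tri N p i (p m) = (if m = i then 1 else 0)"
proof -
  have ex: "\<exists>!f. f \<in> tri_poly N \<and> (\<forall>m<Np N. f (p m) = (if m = i then 1 else 0))"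
    using assms[unfolded unisolvent_def, THEN spec[of _ "\<lambda>m. if m = i then 1 else 0"]] by simp
  have th: "lagr_tri N p i \<in> tri_poly N \<and> (\<forall>m<Np N. lagr_tri N p i (p m) = (if m = i then 1 else 0))"
    unfolding lagr_tri_def by (rule theI'[OF ex])
  then show "lagr_tri N p i \<in> tri_poly N" by (rule conjunct1)
  show "\<And>m. m < Np N \<Longrightarrow> lagr_tri N p i (p m) = (if m = i then 1 else 0)"
    using th by blast
qed

lemma tri_interp:
  assumes "unisolvent N p" "f \<in> tri_poly N"
  shows "f x = (\<Sum>i<Np N. f (p i) * lagr_tri N p i x)"
proof -
  define g where "g = (\<lambda>x. \<Sum>i<Np N. f (p i) * lagr_tri N p i x)"
  have g: "g \<in> tri_poly N" unfolding g_def
    by (rule tri_poly_sum) (auto simp: lagr_tri_props[OF assms(1)])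
  have gv: "g (p m) = f (p m)" if "m < Np N" for m
  proof -
    have "g (p m) = (\<Sum>i<Np N. f (p i) * (if m = i then 1 else 0))"
      unfolding g_def using lagr_tri_props(2)[OF assms(1)] that by (intro sum.cong) auto
    also have "\<dots> = f (p m)" using that by (simp add: if_distrib cong: if_cong)
    finally show ?thesis .
  qed
  have ex: "\<exists>!h. h \<in> tri_poly N \<and> (\<forall>m<Np N. h (p m) = f (p m))"
    using assms(1)[unfolded unisolvent_def, THEN spec[of _ "\<lambda>m. f (p m)"]] by simp
  have "(THE h. h \<in> tri_poly N \<and> (\<forall>m<Np N. h (p m) = f (p m))) = f"
    by (rule the1_equality[OF ex]) (use assms(2) in auto)
  moreover have "(THE h. h \<in> tri_poly N \<and> (\<forall>m<Np N. h (p m) = f (p m))) = g"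
    by (rule the1_equality[OF ex]) (use g gv in auto)
  ultimately have "f = g" by simp
  then have "f x = g x" by simp
  then show ?thesis unfolding g_def .
qed

definition Lp :: "nat \<Rightarrow> (nat \<Rightarrow> real) \<Rightarrow> nat \<Rightarrow> real poly" where
  "Lp N t j = (\<Prod>m\<in>{0..N} - {j}. [: - t m / (t j - t m), 1 / (t j - t m) :])"

lemma lagr_1d_poly: "lagr_1d N t j x = poly (Lp N t j) x"
  unfolding lagr_1d_def Lp_def poly_prod
  by (intro prod.cong) (auto simp: diff_divide_distrib)

lemma lagr_1d_fun: "lagr_1d N t j = (\<lambda>x. poly (Lp N t j) x)"
  using lagr_1d_poly by blast

lemma degree_Lp: "j \<le> N \<Longrightarrow> degree (Lp N t j) \<le> N"
proof -
  assume j: "j \<le> N"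
  have "degree (Lp N t j) \<le> sum (degree \<circ> (\<lambda>m. [: - t m / (t j - t m), 1 / (t j - t m) :])) ({0..N} - {j})"
    unfolding Lp_def by (rule degree_prod_sum_le) simp
  also have "\<dots> \<le> sum (\<lambda>m. 1) ({0..N} - {j})"
    by (intro sum_mono) auto
  also have "\<dots> = N" using j by simp
  finally show ?thesis .
qed

lemma lagr_1d_delta:
  assumes inj: "inj_on t {0..N}" and j: "j \<le> N" and m: "m \<le> N"
  shows "lagr_1d N t j (t m) = (if m = j then 1 else 0)"
proof (cases "m = j")
  case True
  have "lagr_1d N t j (t m) = (\<Prod>k\<in>{0..N} - {j}. 1)"
    unfolding lagr_1d_def using True inj j
    by (intro prod.cong) (auto dest: inj_onD)
  then show ?thesis using True by simp
next
  case False
  then show ?thesis unfolding lagr_1d_def using m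
    by (auto intro!: prod_zero bexI[of _ m])
qed

lemma interp_1d:
  assumes inj: "inj_on t {0..N}" and dQ: "degree Q \<le> N"
  shows "poly Q x = (\<Sum>j<N+1. poly Q (t j) * lagr_1d N t j x)"
proof -
  define R where "R = (\<Sum>j<N+1. Polynomial.smult (poly Q (t j)) (Lp N t j))"
  have polyR: "poly R x = (\<Sum>j<N+1. poly Q (t j) * lagr_1d N t j x)" for x
    unfolding R_def poly_sum by (simp add: lagr_1d_poly)
  have dR: "degree R \<le> N" unfolding R_def
  proof (rule degree_sum_le)
    fix j assume "j \<in> {..<N+1}"
    then have "j \<le> N" by simp
    then show "degree (Polynomial.smult (poly Q (t j)) (Lp N t j)) \<le> N"
      using degree_smult_le[of "poly Q (t j)" "Lp N t j"] degree_Lp[of j N t] by linarith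
  qed simp
  have "Q = R"
  proof (rule poly_eqI_degree[of "t ` {0..N}"])
    fix y assume "y \<in> t ` {0..N}"
    then obtain m where m: "m \<le> N" "y = t m" by auto
    have "poly R y = (\<Sum>j<N+1. poly Q (t j) * (if m = j then 1 else 0))"
      unfolding polyR m(2) using inj m by (intro sum.cong) (auto simp: lagr_1d_delta)
    also have "\<dots> = poly Q y" using m by (simp add: if_distrib cong: if_cong)
    finally show "poly Q y = poly R y" by simp
  next
    have "card (t ` {0..N}) = N + 1" using inj by (simp add: card_image)
    then show "degree Q < card (t ` {0..N})" "degree R < card (t ` {0..N})" using dQ dR by auto
  qed
  then have "poly Q x = poly R x" by simp
  then show ?thesis by (simp only: polyR)
qed

lemma Dt_1d_eq: "Dt_1d N t j j' = poly (pderiv (Lp N t j')) (t j)"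
  unfolding Dt_1d_def lagr_1d_fun by (rule DERIV_imp_deriv) simp

lemma deriv_lagr_1d: "deriv (lagr_1d N t j) x = poly (pderiv (Lp N t j)) x"
  unfolding lagr_1d_fun by (rule DERIV_imp_deriv) simp

lemma interp_1d_deriv:
  assumes inj: "inj_on t {0..N}" and N: "1 \<le> N" and j': "j' \<le> N"
  shows "(\<Sum>j<N+1. lagr_1d N t j u * ((\<alpha> + \<beta> * t j) * poly (pderiv (Lp N t j')) (t j)))
       = (\<alpha> + \<beta> * u) * poly (pderiv (Lp N t j')) u"
proof -
  define Q where "Q = [:\<alpha>, \<beta>:] * pderiv (Lp N t j')"
  have "degree Q \<le> degree [:\<alpha>, \<beta>:] + degree (pderiv (Lp N t j'))"
    unfolding Q_def by (rule degree_mult_le)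
  also have "\<dots> \<le> 1 + (N - 1)"
    using degree_Lp[OF j', of t] by (intro add_mono) (auto simp: degree_pderiv)
  also have "\<dots> = N" using N by simp
  finally have dQ: "degree Q \<le> N" .
  have pQ: "poly Q y = (\<alpha> + \<beta> * y) * poly (pderiv (Lp N t j')) y" for y
    by (simp add: Q_def algebra_simps)
  show ?thesis using interp_1d[OF inj dQ, of u] unfolding pQ by (simp add: mult_ac)
qed

lemma ref_tri_alt: "ref_tri = {x. 0 \<le> fst x} \<inter> {x. 0 \<le> snd x} \<inter> {x. fst x + snd x \<le> 1}"
  by (auto simp: ref_tri_def)

lemma ref_wedge_alt: "ref_wedge = {x. 0 \<le> fst x} \<inter> {x. 0 \<le> fst (snd x)} \<inter> {x. fst x + fst (snd x) \<le> 1}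
   \<inter> {x. 0 \<le> snd (snd x)} \<inter> {x. snd (snd x) \<le> 1}"
  by (auto simp: ref_wedge_def)

lemma compact_ref_tri: "compact ref_tri"
proof -
  have "closed ref_tri" unfolding ref_tri_alt
    by (intro closed_Int closed_Collect_le continuous_intros)
  moreover have "bounded ref_tri"
    by (rule bounded_subset[OF bounded_cbox[of "(0,0)" "(1,1)"]]) (auto simp: ref_tri_def cbox_Pair_eq)
  ultimately show ?thesis by (simp add: compact_eq_bounded_closed)
qed

lemma compact_ref_wedge: "compact ref_wedge"
proof -
  have "closed ref_wedge" unfolding ref_wedge_alt
    by (intro closed_Int closed_Collect_le continuous_intros)
  moreover have "bounded ref_wedge"
    by (rule bounded_subset[OF bounded_cbox[of "(0,0,0)" "(1,1,1)"]]) (auto simp: ref_wedge_def cbox_Pair_eq)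
  ultimately show ?thesis by (simp add: compact_eq_bounded_closed)
qed

lemma convex_ref_tri: "convex ref_tri"
proof -
  have eq: "ref_tri = {x. inner (-1, 0) x \<le> 0} \<inter> {x. inner (0, -1) x \<le> 0} \<inter> {x. inner (1, 1) x \<le> (1::real)}"
    by (auto simp: ref_tri_def inner_prod_def)
  show ?thesis unfolding eq by (intro convex_Int convex_halfspace_le)
qed

lemma convex_ref_wedge: "convex ref_wedge"
proof -
  have eq: "ref_wedge = {x. inner (-1, 0, 0) x \<le> 0} \<inter> {x. inner (0, -1, 0) x \<le> 0} \<inter> {x. inner (1, 1, 0) x \<le> (1::real)}
     \<inter> {x. inner (0, 0, -1) x \<le> 0} \<inter> {x. inner (0, 0, 1) x \<le> (1::real)}"
    by (auto simp: ref_wedge_def inner_prod_def)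
  show ?thesis unfolding eq by (intro convex_Int convex_halfspace_le)
qed

lemma interior_ref_tri: "interior ref_tri \<noteq> {}"
proof -
  define U where "U = {x::real\<times>real. 0 < fst x} \<inter> {x. 0 < snd x} \<inter> {x. fst x + snd x < 1}"
  have "open U" unfolding U_def by (intro open_Int open_Collect_less continuous_intros)
  moreover have "U \<subseteq> ref_tri" by (auto simp: U_def ref_tri_def)
  ultimately have "U \<subseteq> interior ref_tri" by (rule interior_maximal[rotated])
  moreover have "(1/4, 1/4) \<in> U" by (simp add: U_def)
  ultimately show ?thesis by blast
qed

lemma interior_ref_wedge: "interior ref_wedge \<noteq> {}"
proof -
  define U where "U = {x::real\<times>real\<times>real. 0 < fst x} \<inter> {x. 0 < fst (snd x)} \<inter> {x. fst x + fst (snd x) < 1}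
     \<inter> {x. 0 < snd (snd x)} \<inter> {x. snd (snd x) < 1}"
  have "open U" unfolding U_def by (intro open_Int open_Collect_less continuous_intros)
  moreover have "U \<subseteq> ref_wedge" by (auto simp: U_def ref_wedge_def)
  ultimately have "U \<subseteq> interior ref_wedge" by (rule interior_maximal[rotated])
  moreover have "(1/4, 1/4, 1/2) \<in> U" by (simp add: U_def)
  ultimately show ?thesis by blast
qed

lemma cont_integrable:
  fixes f :: "'a::euclidean_space \<Rightarrow> real"
  assumes "compact S" "continuous_on S f"
  shows "f integrable_on S"
  using borel_integrable_compact[OF assms] set_borel_integral_eq_integral(1)
  unfolding set_integrable_def by blast

lemma int_zero_imp_zero:
  fixes f :: "'a::euclidean_space \<Rightarrow> real"
  assumes S: "compact S" "convex S" "interior S \<noteq> {}" and cf: "continuous_on S f"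
    and nn: "\<And>x. x \<in> S \<Longrightarrow> 0 \<le> f x" and I0: "integral S f = 0" and x: "x \<in> S"
  shows "f x = 0"
proof -
  have intS: "f integrable_on S" by (rule cont_integrable[OF S(1) cf])
  have inner: "f y = 0" if y: "y \<in> interior S" for y
  proof -
    obtain a b where ab: "cbox a b \<subseteq> interior S" "y \<in> box a b"
      using open_contains_cbox[OF open_interior y] by metis
    have sub: "cbox a b \<subseteq> S" using ab(1) interior_subset by blast
    have cb: "continuous_on (cbox a b) f" using cf sub by (rule continuous_on_subset)
    have intC: "f integrable_on cbox a b" by (rule integrable_continuous[OF cb])
    have "integral (cbox a b) f \<le> integral S f"
      by (rule integral_subset_le[OF sub intC intS]) (use nn in auto)
    moreover have "0 \<le> integral (cbox a b) f"
      by (rule integral_nonneg[OF intC]) (use nn sub in auto)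
    ultimately have "integral (cbox a b) f = 0" using I0 by simp
    then have h0: "(f has_integral 0) (cbox a b)" using intC by (metis has_integral_integral)
    show "f y = 0"
      by (rule has_integral_0_cbox_imp_0[OF cb _ h0]) (use nn sub ab(2) box_subset_cbox[of a b] in blast)+
  qed
  have cl: "closed {x \<in> S. f x = 0}"
    by (rule continuous_closed_preimage_constant[OF cf compact_imp_closed[OF S(1)]])
  have "interior S \<subseteq> {x \<in> S. f x = 0}" using inner interior_subset by blast
  then have "closure (interior S) \<subseteq> {x \<in> S. f x = 0}" by (rule closure_minimal[OF _ cl])
  moreover have "closure (interior S) = S"
    using convex_closure_interior[OF S(2,3)] closure_closed[OF compact_imp_closed[OF S(1)]] by simp
  ultimately show ?thesis using x by blast
qed


lemma sep:
  fixes F :: "real \<times> real \<Rightarrow> real" and G :: "real \<Rightarrow> real"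
  assumes cF: "continuous_on ref_tri F" and cG: "continuous_on {0..1} G"
  shows "integral ref_wedge (\<lambda>(r, s, u). F (r, s) * G u) = integral ref_tri F * integral {0..1} G"
proof -
  define \<phi> where "\<phi> = (\<lambda>x. indicator ref_tri x * F x)"
  define \<psi> where "\<psi> = (\<lambda>u. indicator {0..1::real} u * G u)"
  define h where "h = (\<lambda>(r::real, s::real, u::real). F (r, s) * G u)"
  have ind: "indicator ref_wedge (r, s, u) = indicator ref_tri (r, s) * (indicator {0..1} u :: real)" for r s u
    by (auto simp: indicator_def ref_wedge_def ref_tri_def)
  have ch: "continuous_on ref_wedge h"
  proof -
    have 1: "continuous_on ref_wedge (\<lambda>x. F (fst x, fst (snd x)))"
      by (rule continuous_on_compose2[OF cF]) (auto intro!: continuous_intros simp: ref_wedge_def ref_tri_def)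
    have 2: "continuous_on ref_wedge (\<lambda>x. G (snd (snd x)))"
      by (rule continuous_on_compose2[OF cG]) (auto intro!: continuous_intros simp: ref_wedge_def)
    have "h = (\<lambda>x. F (fst x, fst (snd x)) * G (snd (snd x)))" by (auto simp: h_def)
    then show ?thesis using continuous_on_mult[OF 1 2] by simp
  qed
  have iW: "integrable lborel (\<lambda>x. indicator ref_wedge x *\<^sub>R h x)"
    by (rule borel_integrable_compact[OF compact_ref_wedge ch])
  have eqW: "(\<lambda>x. indicator ref_wedge x *\<^sub>R h x) = (\<lambda>(r, z). \<phi> (r, fst z) * \<psi> (snd z))"
    by (auto simp: fun_eq_iff \<phi>_def \<psi>_def h_def ind)
  have "integral ref_wedge h = (LINT x:ref_wedge|lborel. h x)"
    using set_borel_integral_eq_integral(2)[of ref_wedge h] iW unfolding set_integrable_def by simp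
  also have "\<dots> = (\<integral>x. (\<lambda>(r, z). \<phi> (r, fst z) * \<psi> (snd z)) x \<partial>lborel)"
    unfolding set_lebesgue_integral_def eqW ..
  also have "\<dots> = (\<integral>x. (\<lambda>(r, z). \<phi> (r, fst z) * \<psi> (snd z)) x \<partial>(lborel \<Otimes>\<^sub>M lborel))"
    by (simp only: lborel_prod)
  also have "\<dots> = (\<integral>r. (\<integral>z. \<phi> (r, fst z) * \<psi> (snd z) \<partial>lborel) \<partial>lborel)"
  proof (rule lborel_pair.integral_fst[symmetric])
    show "integrable (lborel \<Otimes>\<^sub>M lborel) (\<lambda>(r, z). \<phi> (r, fst z) * \<psi> (snd z))"
      using iW unfolding eqW lborel_prod .
  qed
  also have "\<dots> = (\<integral>r. (\<integral>s. \<phi> (r, s) \<partial>lborel) * (\<integral>u. \<psi> u \<partial>lborel) \<partial>lborel)"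
  proof (rule Bochner_Integration.integral_cong[OF refl])
    fix r :: real
    define K where "K = {s. (r, s) \<in> ref_tri} \<times> {0..1::real}"
    have cK: "compact K"
    proof -
      have cP: "continuous_on UNIV (Pair r)" by (intro continuous_intros)
      have "closed {s. (r, s) \<in> ref_tri}"
        using closed_vimage[of ref_tri "\<lambda>s. (r, s)"] compact_imp_closed[OF compact_ref_tri] cP
        by (simp add: vimage_def)
      moreover have "bounded {s. (r, s) \<in> ref_tri}"
        by (rule bounded_subset[OF bounded_cbox[of 0 1]]) (auto simp: ref_tri_def)
      ultimately show ?thesis unfolding K_def
        by (intro compact_Times) (auto simp: compact_eq_bounded_closed)
    qed
    have cont: "continuous_on K (\<lambda>z. F (r, fst z) * G (snd z))"
    proof -
      have 1: "continuous_on K (\<lambda>z. F (r, fst z))"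
        by (rule continuous_on_compose2[OF cF]) (auto intro!: continuous_intros simp: K_def)
      have 2: "continuous_on K (\<lambda>z. G (snd z))"
        by (rule continuous_on_compose2[OF cG]) (auto intro!: continuous_intros simp: K_def)
      show ?thesis using continuous_on_mult[OF 1 2] .
    qed
    have eqK: "(\<lambda>z. indicator K z *\<^sub>R (F (r, fst z) * G (snd z))) = (\<lambda>(s, u). \<phi> (r, s) * \<psi> u)"
      by (auto simp: fun_eq_iff K_def \<phi>_def \<psi>_def indicator_def)
    have iK: "integrable (lborel \<Otimes>\<^sub>M lborel) (\<lambda>(s, u). \<phi> (r, s) * \<psi> u)"
      using borel_integrable_compact[OF cK cont] unfolding eqK lborel_prod .
    have "(\<integral>z. \<phi> (r, fst z) * \<psi> (snd z) \<partial>lborel) = (\<integral>z. (\<lambda>(s, u). \<phi> (r, s) * \<psi> u) z \<partial>(lborel \<Otimes>\<^sub>M lborel))"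
      by (simp add: lborel_prod case_prod_beta)
    also have "\<dots> = (\<integral>s. (\<integral>u. \<phi> (r, s) * \<psi> u \<partial>lborel) \<partial>lborel)"
      by (rule lborel_pair.integral_fst[OF iK, symmetric])
    also have "\<dots> = (\<integral>s. \<phi> (r, s) \<partial>lborel) * (\<integral>u. \<psi> u \<partial>lborel)"
      by simp
    finally show "(\<integral>z. \<phi> (r, fst z) * \<psi> (snd z) \<partial>lborel) = (\<integral>s. \<phi> (r, s) \<partial>lborel) * (\<integral>u. \<psi> u \<partial>lborel)" .
  qed
  also have "\<dots> = (\<integral>r. (\<integral>s. \<phi> (r, s) \<partial>lborel) \<partial>lborel) * (\<integral>u. \<psi> u \<partial>lborel)"
    by simp
  also have "(\<integral>r. (\<integral>s. \<phi> (r, s) \<partial>lborel) \<partial>lborel) = integral ref_tri F"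
  proof -
    have iT: "integrable lborel (\<lambda>x. indicator ref_tri x *\<^sub>R F x)"
      by (rule borel_integrable_compact[OF compact_ref_tri cF])
    have eT: "(\<lambda>x. indicator ref_tri x *\<^sub>R F x) = (\<lambda>(r, s). \<phi> (r, s))"
      by (auto simp: fun_eq_iff \<phi>_def)
    have "(\<integral>r. (\<integral>s. \<phi> (r, s) \<partial>lborel) \<partial>lborel) = (\<integral>x. (\<lambda>(r, s). \<phi> (r, s)) x \<partial>(lborel \<Otimes>\<^sub>M lborel))"
      by (rule lborel_pair.integral_fst) (use iT in \<open>simp add: eT[symmetric] lborel_prod\<close>)
    also have "\<dots> = (LINT x:ref_tri|lborel. F x)"
      unfolding set_lebesgue_integral_def lborel_prod eT ..
    also have "\<dots> = integral ref_tri F"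
      using set_borel_integral_eq_integral(2)[of ref_tri F] iT unfolding set_integrable_def by simp
    finally show ?thesis .
  qed
  also have "(\<integral>u. \<psi> u \<partial>lborel) = integral {0..1} G"
  proof -
    have iI: "integrable lborel (\<lambda>x. indicator {0..1::real} x *\<^sub>R G x)"
      by (rule borel_integrable_compact[OF compact_Icc cG])
    have "(\<integral>u. \<psi> u \<partial>lborel) = (LINT x:{0..1}|lborel. G x)"
      unfolding set_lebesgue_integral_def \<psi>_def by simp
    also have "\<dots> = integral {0..1} G"
      using set_borel_integral_eq_integral(2)[of "{0..1}" G] iI unfolding set_integrable_def by simp
    finally show ?thesis .
  qed
  finally show ?thesis unfolding h_def .
qed

lemma mmul_assoc: "mmul n A (mmul n B C) a b = mmul n (mmul n A B) C a b"
proof -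
  have "mmul n A (mmul n B C) a b = (\<Sum>c<n. \<Sum>d<n. A a c * B c d * C d b)"
    unfolding mmul_def by (simp add: sum_distrib_left mult.assoc)
  also have "\<dots> = (\<Sum>d<n. \<Sum>c<n. A a c * B c d * C d b)" by (rule sum.swap)
  also have "\<dots> = mmul n (mmul n A B) C a b"
    unfolding mmul_def by (simp add: sum_distrib_right)
  finally show ?thesis .
qed

lemma sum_idm_left: "a < n \<Longrightarrow> (\<Sum>c<n. idm a c * f c) = (f a :: real)"
proof -
  assume a: "a < n"
  have "(\<Sum>c<n. idm a c * f c) = (\<Sum>c<n. if c = a then f c else 0)" by (intro sum.cong) (auto simp: idm_def)
  then show ?thesis using a by simp
qed

lemma sum_idm_right: "b < n \<Longrightarrow> (\<Sum>c<n. f c * idm c b) = (f b :: real)"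
proof -
  assume b: "b < n"
  have "(\<Sum>c<n. f c * idm c b) = (\<Sum>c<n. if c = b then f c else 0)" by (intro sum.cong) (auto simp: idm_def)
  then show ?thesis using b by simp
qed

lemma mmul_idm_left: "b < n \<Longrightarrow> a < n \<Longrightarrow> mmul n idm B a b = B a b"
  unfolding mmul_def by (rule sum_idm_left)

definition is_inv :: "nat \<Rightarrow> (nat \<Rightarrow> nat \<Rightarrow> real) \<Rightarrow> (nat \<Rightarrow> nat \<Rightarrow> real) \<Rightarrow> bool" where
  "is_inv n A B \<longleftrightarrow> (\<forall>a b. (n \<le> a \<or> n \<le> b) \<longrightarrow> B a b = 0)
      \<and> (\<forall>a<n. \<forall>b<n. mmul n B A a b = idm a b)
      \<and> (\<forall>a<n. \<forall>b<n. mmul n A B a b = idm a b)"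

lemma is_inv_unique:
  assumes B1: "is_inv n A B1" and B2: "is_inv n A B2"
  shows "B1 = B2"
proof (intro ext)
  fix a b
  show "B1 a b = B2 a b"
  proof (cases "a < n \<and> b < n")
    case True
    have "B1 a b = mmul n B1 (mmul n A B2) a b"
    proof -
      have "mmul n B1 (mmul n A B2) a b = (\<Sum>c<n. B1 a c * idm c b)"
        unfolding mmul_def[of n B1] using B2 True by (intro sum.cong) (auto simp: is_inv_def)
      also have "\<dots> = B1 a b" using True by (simp add: sum_idm_right)
      finally show ?thesis by simp
    qed
    also have "\<dots> = mmul n (mmul n B1 A) B2 a b" by (rule mmul_assoc)
    also have "\<dots> = (\<Sum>c<n. idm a c * B2 c b)"
      unfolding mmul_def[of n _ B2] using B1 True by (intro sum.cong) (auto simp: is_inv_def)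
    also have "\<dots> = B2 a b" using True by (simp add: sum_idm_left)
    finally show ?thesis .
  next
    case False
    then have nb: "n \<le> a \<or> n \<le> b" by auto
    have "\<forall>a b. (n \<le> a \<or> n \<le> b) \<longrightarrow> B1 a b = 0" "\<forall>a b. (n \<le> a \<or> n \<le> b) \<longrightarrow> B2 a b = 0"
      using B1 B2 unfolding is_inv_def by blast+
    then show ?thesis using nb by metis
  qed
qed

lemma minv_is_inv:
  assumes "is_inv n A B"
  shows "is_inv n A (minv n A)"
proof -
  have ex: "\<exists>!B. is_inv n A B" using assms is_inv_unique by blast
  show ?thesis unfolding minv_def is_inv_def[symmetric] by (rule theI'[OF ex])
qed

lemma inv_exists:
  assumes inj: "\<And>v. (\<forall>a<n. (\<Sum>b<n. A a b * v b) = 0) \<Longrightarrow> \<forall>b<n. v b = 0"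
  shows "\<exists>B. is_inv n A B"
proof -
  define A' where "A' = Matrix.mat n n (\<lambda>(i, j). A i j)"
  have A'c: "A' \<in> carrier_mat n n" by (simp add: A'_def)
  have "Determinant.det A' \<noteq> 0"
  proof
    assume "Determinant.det A' = 0"
    then obtain v where v: "v \<in> carrier_vec n" "v \<noteq> 0\<^sub>v n" "A' *\<^sub>v v = 0\<^sub>v n"
      using det_0_iff_vec_prod_zero[OF A'c] by blast
    have "(\<Sum>b<n. A a b * vec_index v b) = 0" if a: "a < n" for a
    proof -
      have "vec_index (A' *\<^sub>v v) a = 0" using v(3) a by simp
      then show ?thesis using a v(1)
        by (simp add: A'_def scalar_prod_def Matrix.row_def lessThan_atLeast0)
    qed
    then have "\<forall>b<n. vec_index v b = 0" using inj[of "vec_index v"] by blast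
    then have "v = 0\<^sub>v n" using v(1) by (intro eq_vecI) auto
    then show False using v(2) by simp
  qed
  then have "A' \<in> Units (ring_mat TYPE(real) n ())" by (rule det_non_zero_imp_unit[OF A'c])
  then obtain B' where B': "B' \<in> carrier_mat n n" "B' * A' = 1\<^sub>m n" "A' * B' = 1\<^sub>m n"
    unfolding Units_def by (auto simp: ring_mat_def)
  define B where "B a b = (if a < n \<and> b < n then B' $$ (a, b) else 0)" for a b
  have 1: "mmul n B A a b = idm a b" if "a < n" "b < n" for a b
  proof -
    have "(B' * A') $$ (a, b) = idm a b" using B'(2) that by (simp add: idm_def)
    then show ?thesis using that B'(1)
      by (simp add: mmul_def B_def A'_def scalar_prod_def Matrix.row_def Matrix.col_def lessThan_atLeast0)
  qed
  have 2: "mmul n A B a b = idm a b" if "a < n" "b < n" for a b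
  proof -
    have "(A' * B') $$ (a, b) = idm a b" using B'(3) that by (simp add: idm_def)
    then show ?thesis using that B'(1)
      by (simp add: mmul_def B_def A'_def scalar_prod_def Matrix.row_def Matrix.col_def lessThan_atLeast0)
  qed
  have "is_inv n A B" unfolding is_inv_def using 1 2 by (auto simp: B_def)
  then show ?thesis by blast
qed

lemma gram_inv:
  fixes f :: "nat \<Rightarrow> 'a::euclidean_space \<Rightarrow> real" and w :: "'a \<Rightarrow> real" and x :: "nat \<Rightarrow> 'a"
  assumes S: "compact S" "convex S" "interior S \<noteq> {}"
    and cf: "\<And>a. a < n \<Longrightarrow> continuous_on S (f a)"
    and cw: "continuous_on S w" and wpos: "\<And>y. y \<in> S \<Longrightarrow> 0 < w y"
    and xS: "\<And>c. c < n \<Longrightarrow> x c \<in> S"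
    and delta: "\<And>a c. a < n \<Longrightarrow> c < n \<Longrightarrow> f a (x c) = (if a = c then 1 else 0)"
  shows "\<exists>B. is_inv n (\<lambda>a b. integral S (\<lambda>y. f a y * f b y * w y)) B"
proof (rule inv_exists)
  fix v :: "nat \<Rightarrow> real"
  assume hv: "\<forall>a<n. (\<Sum>b<n. integral S (\<lambda>y. f a y * f b y * w y) * v b) = 0"
  define q where "q y = (\<Sum>a<n. v a * f a y)" for y
  have cq: "continuous_on S q" unfolding q_def
    by (intro continuous_intros) (use cf in auto)
  have cg: "continuous_on S (\<lambda>y. (v a * v b) * (f a y * f b y * w y))" if "a < n" "b < n" for a b
    using cf[OF that(1)] cf[OF that(2)] cw by (intro continuous_intros) auto
  have ig: "(\<lambda>y. (v a * v b) * (f a y * f b y * w y)) integrable_on S" if "a < n" "b < n" for a b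
    by (rule cont_integrable[OF S(1) cg[OF that]])
  have ig2: "(\<lambda>y. \<Sum>b<n. (v a * v b) * (f a y * f b y * w y)) integrable_on S" if "a < n" for a
    by (rule integrable_sum) (use ig that in auto)
  have "0 = (\<Sum>a<n. v a * (\<Sum>b<n. integral S (\<lambda>y. f a y * f b y * w y) * v b))"
    using hv by simp
  also have "\<dots> = (\<Sum>a<n. \<Sum>b<n. integral S (\<lambda>y. (v a * v b) * (f a y * f b y * w y)))"
    by (simp add: sum_distrib_left mult_ac)
  also have "\<dots> = (\<Sum>a<n. integral S (\<lambda>y. \<Sum>b<n. (v a * v b) * (f a y * f b y * w y)))"
    by (intro sum.cong refl integral_sum[symmetric]) (use ig in auto)
  also have "\<dots> = integral S (\<lambda>y. \<Sum>a<n. \<Sum>b<n. (v a * v b) * (f a y * f b y * w y))"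
    by (intro integral_sum[symmetric]) (use ig2 in auto)
  also have "\<dots> = integral S (\<lambda>y. q y * q y * w y)"
    by (intro integral_cong) (simp add: q_def sum_distrib_left sum_distrib_right mult_ac)
  finally have I0: "integral S (\<lambda>y. q y * q y * w y) = 0" by simp
  have z: "q y * q y * w y = 0" if "y \<in> S" for y
  proof (rule int_zero_imp_zero[OF S _ _ I0 that])
    show "continuous_on S (\<lambda>y. q y * q y * w y)" using cq cw by (intro continuous_intros)
    show "\<And>x. x \<in> S \<Longrightarrow> 0 \<le> q x * q x * w x" using wpos by (simp add: less_imp_le)
  qed
  show "\<forall>b<n. v b = 0"
  proof (intro allI impI)
    fix c assume c: "c < n"
    have "q (x c) = 0" using z[OF xS[OF c]] wpos[OF xS[OF c]] by simp
    moreover have "q (x c) = (\<Sum>a<n. if a = c then v a else 0)"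
      unfolding q_def using delta c by (intro sum.cong) auto
    ultimately show "v c = 0" using c by simp
  qed
qed

definition drf :: "nat \<Rightarrow> (nat \<Rightarrow> real \<times> real) \<Rightarrow> nat \<Rightarrow> real \<times> real \<Rightarrow> real" where
  "drf N p i = (SOME f. f \<in> tri_poly N \<and> (\<forall>x s. ((\<lambda>x. lagr_tri N p i (x, s)) has_real_derivative f (x, s)) (at x)))"
definition dsf :: "nat \<Rightarrow> (nat \<Rightarrow> real \<times> real) \<Rightarrow> nat \<Rightarrow> real \<times> real \<Rightarrow> real" where
  "dsf N p i = (SOME f. f \<in> tri_poly N \<and> (\<forall>r x. ((\<lambda>x. lagr_tri N p i (r, x)) has_real_derivative f (r, x)) (at x)))"

lemma drf:
  assumes "unisolvent N p"
  shows "drf N p i \<in> tri_poly N" "((\<lambda>x. lagr_tri N p i (x, s)) has_real_derivative drf N p i (x, s)) (at x)"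
proof -
  have ex: "\<exists>f. f \<in> tri_poly N \<and> (\<forall>x s. ((\<lambda>x. lagr_tri N p i (x, s)) has_real_derivative f (x, s)) (at x))"
    using tri_poly_deriv_r[OF lagr_tri_props(1)[OF assms, of i]] by metis
  from someI_ex[OF ex] show "drf N p i \<in> tri_poly N" "((\<lambda>x. lagr_tri N p i (x, s)) has_real_derivative drf N p i (x, s)) (at x)"
    unfolding drf_def by blast+
qed

lemma dsf:
  assumes "unisolvent N p"
  shows "dsf N p i \<in> tri_poly N" "((\<lambda>x. lagr_tri N p i (r, x)) has_real_derivative dsf N p i (r, x)) (at x)"
proof -
  have ex: "\<exists>f. f \<in> tri_poly N \<and> (\<forall>r x. ((\<lambda>x. lagr_tri N p i (r, x)) has_real_derivative f (r, x)) (at x))"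
    using tri_poly_deriv_s[OF lagr_tri_props(1)[OF assms, of i]] by metis
  from someI_ex[OF ex] show "dsf N p i \<in> tri_poly N" "((\<lambda>x. lagr_tri N p i (r, x)) has_real_derivative dsf N p i (r, x)) (at x)"
    unfolding dsf_def by blast+
qed

lemma pd_r_ell: "unisolvent N p \<Longrightarrow>
  pd_r (ell N p t b) r s u = drf N p (b div (N+1)) (r, s) * lagr_1d N t (b mod (N+1)) u"
  unfolding pd_r_def ell_def
  by (rule DERIV_imp_deriv) (rule DERIV_cmult_right[OF drf(2)])

lemma pd_s_ell: "unisolvent N p \<Longrightarrow>
  pd_s (ell N p t b) r s u = dsf N p (b div (N+1)) (r, s) * lagr_1d N t (b mod (N+1)) u"
  unfolding pd_s_def ell_def
  by (rule DERIV_imp_deriv) (rule DERIV_cmult_right[OF dsf(2)])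

lemma pd_t_ell:
  "pd_t (ell N p t b) r s u = lagr_tri N p (b div (N+1)) (r, s) * poly (pderiv (Lp N t (b mod (N+1)))) u"
  unfolding pd_t_def ell_def lagr_1d_fun
  by (rule DERIV_imp_deriv) (auto intro!: derivative_eq_intros)

lemma Dr_tri_eq: "unisolvent N p \<Longrightarrow> Dr_tri N p i i' = drf N p i' (p i)"
  unfolding Dr_tri_def using DERIV_imp_deriv[OF drf(2)] by simp

lemma Ds_tri_eq: "unisolvent N p \<Longrightarrow> Ds_tri N p i i' = dsf N p i' (p i)"
  unfolding Ds_tri_def using DERIV_imp_deriv[OF dsf(2)] by simp

lemma cont_split:
  fixes F :: "real \<times> real \<Rightarrow> real" and G :: "real \<Rightarrow> real"
  assumes "continuous_on UNIV F" "continuous_on UNIV G"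
  shows "continuous_on S (\<lambda>(r, s, u). F (r, s) * G u)"
proof -
  have e: "(\<lambda>(r, s, u). F (r, s) * G u) = (\<lambda>x. F (fst x, fst (snd x)) * G (snd (snd x)))" by auto
  have 1: "continuous_on UNIV (\<lambda>x::real\<times>real\<times>real. F (fst x, fst (snd x)))"
    by (rule continuous_on_compose2[OF assms(1)]) (auto intro!: continuous_intros)
  have 2: "continuous_on UNIV (\<lambda>x::real\<times>real\<times>real. G (snd (snd x)))"
    by (rule continuous_on_compose2[OF assms(2)]) (auto intro!: continuous_intros)
  show ?thesis unfolding e by (rule continuous_on_subset[OF continuous_on_mult[OF 1 2]]) simp
qed

lemma int_split:
  fixes F :: "real \<times> real \<Rightarrow> real" and G :: "real \<Rightarrow> real"
  assumes "continuous_on UNIV F" "continuous_on UNIV G"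
  shows "(\<lambda>(r, s, u). F (r, s) * G u) integrable_on ref_wedge"
  by (rule cont_integrable[OF compact_ref_wedge cont_split[OF assms]])

lemma sep':
  fixes F :: "real \<times> real \<Rightarrow> real" and G :: "real \<Rightarrow> real"
  assumes "continuous_on UNIV F" "continuous_on UNIV G"
  shows "integral ref_wedge (\<lambda>(r, s, u). F (r, s) * G u) = integral ref_tri F * integral {0..1} G"
  by (rule sep) (use assms continuous_on_subset in blast)+

lemma cont_lt: "unisolvent N p \<Longrightarrow> continuous_on S (lagr_tri N p i)"
  by (rule tri_poly_cont[OF lagr_tri_props(1)])
lemma cont_drf: "unisolvent N p \<Longrightarrow> continuous_on S (drf N p i)"
  by (rule tri_poly_cont[OF drf(1)])
lemma cont_dsf: "unisolvent N p \<Longrightarrow> continuous_on S (dsf N p i)"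
  by (rule tri_poly_cont[OF dsf(1)])
lemma cont_l1: "continuous_on S (lagr_1d N t j)"
  unfolding lagr_1d_fun by (intro continuous_intros)
lemma cont_J0: "continuous_on S (\<lambda>x. Dxy vx vy * zt (vz :: nat \<Rightarrow> real) (fst x) (snd x))"
  unfolding zt_def by (intro continuous_intros)
lemma sum_split:
  fixes q :: nat assumes q: "0 < q"
  shows "(\<Sum>c<P*q. h c) = (\<Sum>i<P. \<Sum>j<q. h (i*q + j))"
proof -
  have d: "(i*q + j) div q = i" "(i*q + j) mod q = j" if "j < q" for i j
    using that q by simp_all
  have inj: "inj_on (\<lambda>(i, j). i*q + j) ({..<P} \<times> {..<q})"
  proof (rule inj_onI, clarify)
    fix i j i' j' assume h: "i < P" "j < q" "i' < P" "j' < q" "i*q + j = i'*q + j'"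
    then have "(i*q + j) div q = (i'*q + j') div q" "(i*q + j) mod q = (i'*q + j') mod q" by simp_all
    then show "i = i' \<and> j = j'" by (metis d h(2) h(4))
  qed
  have img: "(\<lambda>(i, j). i*q + j) ` ({..<P} \<times> {..<q}) = {..<P*q}"
  proof (intro equalityI subsetI)
    fix c assume "c \<in> (\<lambda>(i, j). i*q + j) ` ({..<P} \<times> {..<q})"
    then obtain i j where "i < P" "j < q" "c = i*q + j" by auto
    then have "c < (i + 1) * q" by simp
    also have "\<dots> \<le> P * q" using \<open>i < P\<close> by (intro mult_right_mono) auto
    finally show "c \<in> {..<P*q}" by simp
  next
    fix c assume "c \<in> {..<P*q}"
    then have "c div q < P" "c mod q < q" "c = (c div q) * q + c mod q"
      using q by (auto simp: less_mult_imp_div_less)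
    then show "c \<in> (\<lambda>(i, j). i*q + j) ` ({..<P} \<times> {..<q})"
      by (intro image_eqI[of _ _ "(c div q, c mod q)"]) auto
  qed
  have "(\<Sum>i<P. \<Sum>j<q. h (i*q + j)) = (\<Sum>(i, j)\<in>{..<P} \<times> {..<q}. h (i*q + j))"
    by (rule sum.cartesian_product)
  also have "\<dots> = sum h ((\<lambda>(i, j). i*q + j) ` ({..<P} \<times> {..<q}))"
    using sum.reindex[OF inj, of h] by (simp add: case_prod_beta)
  also have "\<dots> = (\<Sum>c<P*q. h c)" by (simp add: img)
  finally show ?thesis by simp
qed

lemma div_mod_eq_iff: "(a::nat) = c \<longleftrightarrow> a div q = c div q \<and> a mod q = c mod q"
  by (metis div_mult_mod_eq)

lemma integral_cong3:
  assumes "\<And>r s u. (r, s, u) \<in> S \<Longrightarrow> f (r, s, u) = g (r, s, u)"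
  shows "integral S f = integral S g"
  by (rule integral_cong) (metis assms prod_cases3)

context
  fixes N :: nat and p :: "nat \<Rightarrow> real \<times> real" and t :: "nat \<Rightarrow> real" and vx vy vz :: "nat \<Rightarrow> real"
  assumes N1: "1 \<le> N" and pT: "\<forall>i<Np N. p i \<in> ref_tri" and uni: "unisolvent N p"
    and gll: "gll_nodes N t" and vm: "vertically_mapped vx vy"
    and Jpos: "\<forall>(r, s, u)\<in>ref_wedge. Jac vx vy vz r s u > 0"
begin

lemma t_inj: "inj_on t {0..N}"
  using gll strict_mono_on_imp_inj_on unfolding gll_nodes_def by blast

lemma t_bounds: "j \<le> N \<Longrightarrow> 0 \<le> t j" "j \<le> N \<Longrightarrow> t j \<le> 1"
proof -
  assume j: "j \<le> N"
  have sm: "strict_mono_on {0..N} t" and t0: "t 0 = 0" and tN: "t N = 1" using gll by (auto simp: gll_nodes_def)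
  show "0 \<le> t j" using strict_mono_on_leD[OF sm, of 0 j] j t0 by simp
  show "t j \<le> 1" using strict_mono_on_leD[OF sm, of j N] j tN by simp
qed

lemma Jac_eq: "Jac vx vy vz r s u = Dxy vx vy * zt vz r s"
  by (rule Jac_vm[OF vm])

lemma Dxy_nz: "Dxy vx vy \<noteq> 0"
proof -
  have "(0, 0, 0) \<in> ref_wedge" by (simp add: ref_wedge_def)
  then have "Jac vx vy vz 0 0 0 > 0" using Jpos by blast
  then show ?thesis by (auto simp: Jac_eq)
qed

lemma zt_nz: "(r, s, u) \<in> ref_wedge \<Longrightarrow> zt vz r s \<noteq> 0"
  using Jpos by (auto simp: Jac_eq)

lemma J0_pos: "x \<in> ref_tri \<Longrightarrow> 0 < Dxy vx vy * zt vz (fst x) (snd x)"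
proof -
  assume "x \<in> ref_tri"
  then have "(fst x, snd x, 0) \<in> ref_wedge" by (auto simp: ref_tri_def ref_wedge_def)
  then have "Jac vx vy vz (fst x) (snd x) 0 > 0" using Jpos by blast
  then show ?thesis by (simp add: Jac_eq)
qed

lemma M_inv: "is_inv (Np N * (N+1)) (mass_k N p t vx vy vz) (minv (Np N * (N+1)) (mass_k N p t vx vy vz))"
proof -
  define q where "q = N + 1"
  define f where "f a = (\<lambda>(r::real, s::real, u::real). lagr_tri N p (a div q) (r, s) * lagr_1d N t (a mod q) u)" for a
  define w where "w = (\<lambda>(r::real, s::real, u::real). Dxy vx vy * zt vz r s * 1)"
  define x where "x c = (fst (p (c div q)), snd (p (c div q)), t (c mod q))" for c
  have q0: "0 < q" by (simp add: q_def)
  have eqM: "mass_k N p t vx vy vz = (\<lambda>a b. integral ref_wedge (\<lambda>y. f a y * f b y * w y))"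
    unfolding mass_k_def f_def w_def ell_def q_def
    by (intro ext arg_cong[where f="integral ref_wedge"]) (auto simp: Jac_eq)
  have "\<exists>B. is_inv (Np N * q) (\<lambda>a b. integral ref_wedge (\<lambda>y. f a y * f b y * w y)) B"
  proof (rule gram_inv[OF compact_ref_wedge convex_ref_wedge interior_ref_wedge])
    fix a assume "a < Np N * q"
    show "continuous_on ref_wedge (f a)" unfolding f_def
      by (rule cont_split) (auto intro: cont_lt[OF uni] cont_l1)
  next
    have "continuous_on ref_wedge (\<lambda>(r, s, u). (\<lambda>x. Dxy vx vy * zt vz (fst x) (snd x)) (r, s) * (\<lambda>_. 1::real) u)"
      by (rule cont_split) (auto intro: cont_J0)
    then show "continuous_on ref_wedge w" unfolding w_def by simp
  next
    fix y assume "y \<in> ref_wedge"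
    then show "0 < w y" using Jpos by (auto simp: w_def Jac_eq)
  next
    fix c assume c: "c < Np N * q"
    then have "c div q < Np N" "c mod q \<le> N" using q0 by (auto simp: less_mult_imp_div_less q_def)
    moreover obtain a1 a2 where "p (c div q) = (a1, a2)" by fastforce
    ultimately show "x c \<in> ref_wedge" using pT t_bounds[of "c mod q"]
      by (auto simp: x_def ref_wedge_def ref_tri_def)
  next
    fix a c assume a: "a < Np N * q" and c: "c < Np N * q"
    then have "a div q < Np N" "c div q < Np N" "a mod q \<le> N" "c mod q \<le> N"
      using q0 by (auto simp: less_mult_imp_div_less q_def)
    then show "f a (x c) = (if a = c then 1 else 0)"
      unfolding f_def x_def using lagr_tri_props(2)[OF uni] lagr_1d_delta[OF t_inj]
      by (auto simp: div_mod_eq_iff[of a c q])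
  qed
  then obtain B where B: "is_inv (Np N * q) (\<lambda>a b. integral ref_wedge (\<lambda>y. f a y * f b y * w y)) B" by blast
  show ?thesis unfolding eqM using minv_is_inv[OF B[unfolded q_def]] .
qed

lemma Mt_inv: "is_inv (Np N) (mass_tri_k N p vx vy vz) (minv (Np N) (mass_tri_k N p vx vy vz))"
proof -
  define w where "w = (\<lambda>x::real\<times>real. Dxy vx vy * zt vz (fst x) (snd x))"
  have eqM: "mass_tri_k N p vx vy vz = (\<lambda>a b. integral ref_tri (\<lambda>y. lagr_tri N p a y * lagr_tri N p b y * w y))"
    unfolding mass_tri_k_def w_def
    by (intro ext arg_cong[where f="integral ref_tri"]) (auto simp: Jac_eq)
  have "\<exists>B. is_inv (Np N) (\<lambda>a b. integral ref_tri (\<lambda>y. lagr_tri N p a y * lagr_tri N p b y * w y)) B"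
  proof (rule gram_inv[OF compact_ref_tri convex_ref_tri interior_ref_tri])
    show "\<And>a. a < Np N \<Longrightarrow> continuous_on ref_tri (lagr_tri N p a)" by (rule cont_lt[OF uni])
    show "continuous_on ref_tri w" unfolding w_def by (rule cont_J0)
    show "\<And>y. y \<in> ref_tri \<Longrightarrow> 0 < w y" unfolding w_def by (rule J0_pos)
    show "\<And>c. c < Np N \<Longrightarrow> p c \<in> ref_tri" using pT by blast
    show "\<And>a c. a < Np N \<Longrightarrow> c < Np N \<Longrightarrow> lagr_tri N p a (p c) = (if a = c then 1 else 0)"
      using lagr_tri_props(2)[OF uni] by auto
  qed
  then obtain B where B: "is_inv (Np N) (\<lambda>a b. integral ref_tri (\<lambda>y. lagr_tri N p a y * lagr_tri N p b y * w y)) B" by blast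
  show ?thesis unfolding eqM using minv_is_inv[OF B] .
qed

lemma dm_simps: "jc < (q::nat) \<Longrightarrow> (ic*q+jc) div q = ic" "jc < q \<Longrightarrow> (ic*q+jc) mod q = jc"
  by auto

lemma mmul_diag: "a < n \<Longrightarrow> mmul n (diagm d) B a b = d a * B a b"
proof -
  assume a: "a < n"
  have "mmul n (diagm d) B a b = (\<Sum>c<n. if c = a then d a * B a b else 0)"
    unfolding mmul_def diagm_def by (intro sum.cong) auto
  then show ?thesis using a by simp
qed

lemma tri_sum_R:
  "(\<Sum>i<Np N. lagr_tri N p i x * (rx * Dr_tri N p i i' + sx * Ds_tri N p i i'))
     = rx * drf N p i' x + sx * dsf N p i' x"
proof -
  have "(\<Sum>i<Np N. lagr_tri N p i x * (rx * Dr_tri N p i i' + sx * Ds_tri N p i i'))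
     = rx * (\<Sum>i<Np N. drf N p i' (p i) * lagr_tri N p i x) + sx * (\<Sum>i<Np N. dsf N p i' (p i) * lagr_tri N p i x)"
    by (simp add: Dr_tri_eq[OF uni] Ds_tri_eq[OF uni] sum_distrib_left sum.distrib algebra_simps)
  also have "\<dots> = rx * drf N p i' x + sx * dsf N p i' x"
    using tri_interp[OF uni drf(1)[OF uni], of i' x] tri_interp[OF uni dsf(1)[OF uni], of i' x] by simp
  finally show ?thesis .
qed

lemma pointwise:
  fixes rx sx \<alpha> \<beta> :: real and i' j' :: nat and L :: "nat \<Rightarrow> nat \<Rightarrow> real"
  assumes j': "j' \<le> N"
  defines "X \<equiv> \<lambda>a b. kron (N+1) (\<lambda>i i'. rx * Dr_tri N p i i' + sx * Ds_tri N p i i') idm a b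
       + kron (N+1) L (mmul (N+1) (diagm (\<lambda>j. \<alpha> + \<beta> * t j)) (Dt_1d N t)) a b"
  shows "(\<Sum>c<Np N * (N+1). ell N p t c r s u * X c (i' * (N+1) + j'))
     = (rx * drf N p i' (r, s) + sx * dsf N p i' (r, s)) * lagr_1d N t j' u
       + (\<Sum>i<Np N. lagr_tri N p i (r, s) * L i i') * ((\<alpha> + \<beta> * u) * poly (pderiv (Lp N t j')) u)"
proof -
  define q where "q = N + 1"
  define R where "R i i' = rx * Dr_tri N p i i' + sx * Ds_tri N p i i'" for i i'
  define K where "K = (\<alpha> + \<beta> * u) * poly (pderiv (Lp N t j')) u"
  have jq: "j' < q" using j' by (simp add: q_def)
  have e1: "ell N p t (ic*q+jc) r s u = lagr_tri N p ic (r, s) * lagr_1d N t jc u" if "jc < q" for ic jc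
    using that unfolding ell_def q_def[symmetric] by (simp add: dm_simps)
  have e2: "X (ic*q+jc) (i'*q+j') = R ic i' * idm jc j' + L ic i' * ((\<alpha> + \<beta> * t jc) * Dt_1d N t jc j')"
    if "jc < q" for ic jc
    using that jq unfolding X_def q_def[symmetric] by (simp add: kron_def mmul_diag R_def dm_simps)
  have inner1: "(\<Sum>jc<q. lagr_1d N t jc u * idm jc j') = lagr_1d N t j' u"
    by (rule sum_idm_right[OF jq])
  have inner2: "(\<Sum>jc<q. lagr_1d N t jc u * ((\<alpha> + \<beta> * t jc) * Dt_1d N t jc j')) = K"
    unfolding K_def q_def Dt_1d_eq by (rule interp_1d_deriv[OF t_inj N1 j'])
  have "(\<Sum>c<Np N * q. ell N p t c r s u * X c (i' * q + j'))
      = (\<Sum>ic<Np N. \<Sum>jc<q. ell N p t (ic*q+jc) r s u * X (ic*q+jc) (i' * q + j'))"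
    by (rule sum_split) (simp add: q_def)
  also have "\<dots> = (\<Sum>ic<Np N. lagr_tri N p ic (r, s) * R ic i' * (\<Sum>jc<q. lagr_1d N t jc u * idm jc j')
        + lagr_tri N p ic (r, s) * L ic i' * (\<Sum>jc<q. lagr_1d N t jc u * ((\<alpha> + \<beta> * t jc) * Dt_1d N t jc j')))"
  proof (rule sum.cong[OF refl])
    fix ic
    have "(\<Sum>jc<q. ell N p t (ic*q+jc) r s u * X (ic*q+jc) (i' * q + j'))
        = (\<Sum>jc<q. lagr_tri N p ic (r, s) * R ic i' * (lagr_1d N t jc u * idm jc j')
          + lagr_tri N p ic (r, s) * L ic i' * (lagr_1d N t jc u * ((\<alpha> + \<beta> * t jc) * Dt_1d N t jc j')))"
    proof (rule sum.cong[OF refl])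
      fix jc assume "jc \<in> {..<q}"
      then have jc: "jc < q" by simp
      show "ell N p t (ic*q+jc) r s u * X (ic*q+jc) (i' * q + j') = lagr_tri N p ic (r, s) * R ic i' * (lagr_1d N t jc u * idm jc j')
          + lagr_tri N p ic (r, s) * L ic i' * (lagr_1d N t jc u * ((\<alpha> + \<beta> * t jc) * Dt_1d N t jc j'))"
        unfolding e1[OF jc] e2[OF jc] by (simp add: algebra_simps)
    qed
    also have "\<dots> = lagr_tri N p ic (r, s) * R ic i' * (\<Sum>jc<q. lagr_1d N t jc u * idm jc j')
        + lagr_tri N p ic (r, s) * L ic i' * (\<Sum>jc<q. lagr_1d N t jc u * ((\<alpha> + \<beta> * t jc) * Dt_1d N t jc j'))"
      by (simp add: sum.distrib sum_distrib_left)
    finally show "(\<Sum>jc<q. ell N p t (ic*q+jc) r s u * X (ic*q+jc) (i' * q + j')) = \<dots>" .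
  qed
  also have "\<dots> = (\<Sum>ic<Np N. lagr_tri N p ic (r, s) * R ic i') * lagr_1d N t j' u
       + (\<Sum>ic<Np N. lagr_tri N p ic (r, s) * L ic i') * K"
    unfolding inner1 inner2 by (simp add: sum.distrib sum_distrib_right)
  also have "(\<Sum>ic<Np N. lagr_tri N p ic (r, s) * R ic i') = rx * drf N p i' (r, s) + sx * dsf N p i' (r, s)"
    unfolding R_def by (rule tri_sum_R)
  finally show ?thesis unfolding q_def K_def .
qed

lemma core:
  fixes GR GS GT :: "real \<Rightarrow> real \<Rightarrow> real \<Rightarrow> real" and rx sx \<alpha> \<beta> :: real and L :: "nat \<Rightarrow> nat \<Rightarrow> real"
  assumes hG: "\<And>r s u. (r, s, u) \<in> ref_wedge \<Longrightarrow> GR r s u = rx \<and> GS r s u = sx \<and> GT r s u * Jac vx vy vz r s u = \<alpha> + \<beta> * u"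
    and hL: "\<And>i i'. i < Np N \<Longrightarrow> i' < Np N \<Longrightarrow> mmul (Np N) (mass_tri_k N p vx vy vz) L i i' = mass_tri_ref N p i i'"
    and a: "a < Np N * (N+1)" and b: "b < Np N * (N+1)"
  defines "X \<equiv> \<lambda>a b. kron (N+1) (\<lambda>i i'. rx * Dr_tri N p i i' + sx * Ds_tri N p i i') idm a b
       + kron (N+1) L (mmul (N+1) (diagm (\<lambda>j. \<alpha> + \<beta> * t j)) (Dt_1d N t)) a b"
  shows "integral ref_wedge (\<lambda>(r, s, u). (GR r s u * pd_r (ell N p t b) r s u + GS r s u * pd_s (ell N p t b) r s u
            + GT r s u * pd_t (ell N p t b) r s u) * ell N p t a r s u * Jac vx vy vz r s u)
       = mmul (Np N * (N+1)) (mass_k N p t vx vy vz) X a b"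
proof -
  define q where "q = N + 1"
  define i where "i = a div q"
  define j where "j = a mod q"
  define i' where "i' = b div q"
  define j' where "j' = b mod q"
  have q0: "0 < q" by (simp add: q_def)
  have ij: "i < Np N" "i' < Np N" "j \<le> N" "j' \<le> N"
    using a b q0 by (auto simp: i_def j_def i'_def j'_def less_mult_imp_div_less q_def)
  have bsplit: "b = i' * q + j'" by (simp add: i'_def j'_def)
  define J0 where "J0 x = Dxy vx vy * zt vz (fst x) (snd x)" for x :: "real \<times> real"
  define A1 where "A1 x = rx * drf N p i' x + sx * dsf N p i' x" for x
  define Ls where "Ls x = (\<Sum>k<Np N. lagr_tri N p k x * L k i')" for x
  define pdj where "pdj u = poly (pderiv (Lp N t j')) u" for u
  define g where "g u = \<alpha> + \<beta> * u" for u :: real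
  have cJ0: "continuous_on UNIV J0" unfolding J0_def by (rule cont_J0)
  have clt: "\<And>k. continuous_on UNIV (lagr_tri N p k)" by (rule cont_lt[OF uni])
  have cl1: "\<And>k. continuous_on UNIV (lagr_1d N t k)" by (rule cont_l1)
  have cA1: "continuous_on UNIV A1" unfolding A1_def
    using cont_drf[OF uni] cont_dsf[OF uni] by (intro continuous_intros) auto
  have cLs: "continuous_on UNIV Ls" unfolding Ls_def
    using clt by (intro continuous_intros) auto
  have cpdj: "continuous_on UNIV pdj" unfolding pdj_def by (intro continuous_intros)
  have cg: "continuous_on UNIV g" unfolding g_def by (intro continuous_intros)
  have ell_eq: "ell N p t c r s u = lagr_tri N p (c div q) (r, s) * lagr_1d N t (c mod q) u" for c r s u
    by (simp add: ell_def q_def)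
  define I1 where "I1 = integral ref_wedge (\<lambda>(r, s, u). (lagr_tri N p i (r, s) * J0 (r, s) * A1 (r, s)) * (lagr_1d N t j u * lagr_1d N t j' u))"
  define I2 where "I2 = integral ref_wedge (\<lambda>(r, s, u). (lagr_tri N p i (r, s) * J0 (r, s) * Ls (r, s)) * (lagr_1d N t j u * (g u * pdj u)))"
  define I3 where "I3 = integral ref_wedge (\<lambda>(r, s, u). (lagr_tri N p i' (r, s) * lagr_tri N p i (r, s)) * (lagr_1d N t j u * (g u * pdj u)))"
  have int1: "(\<lambda>(r, s, u). (lagr_tri N p i (r, s) * J0 (r, s) * A1 (r, s)) * (lagr_1d N t j u * lagr_1d N t j' u)) integrable_on ref_wedge"
    by (rule int_split[where F="\<lambda>x. lagr_tri N p i x * J0 x * A1 x" and G="\<lambda>u. lagr_1d N t j u * lagr_1d N t j' u", simplified])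
       (use clt cJ0 cA1 cl1 in \<open>auto intro!: continuous_intros\<close>)
  have int2: "(\<lambda>(r, s, u). (lagr_tri N p i (r, s) * J0 (r, s) * Ls (r, s)) * (lagr_1d N t j u * (g u * pdj u))) integrable_on ref_wedge"
    by (rule int_split[where F="\<lambda>x. lagr_tri N p i x * J0 x * Ls x" and G="\<lambda>u. lagr_1d N t j u * (g u * pdj u)", simplified])
       (use clt cJ0 cLs cl1 cg cpdj in \<open>auto intro!: continuous_intros\<close>)
  have int3: "(\<lambda>(r, s, u). (lagr_tri N p i' (r, s) * lagr_tri N p i (r, s)) * (lagr_1d N t j u * (g u * pdj u))) integrable_on ref_wedge"
    by (rule int_split[where F="\<lambda>x. lagr_tri N p i' x * lagr_tri N p i x" and G="\<lambda>u. lagr_1d N t j u * (g u * pdj u)", simplified])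
       (use clt cl1 cg cpdj in \<open>auto intro!: continuous_intros\<close>)
  have LHS: "integral ref_wedge (\<lambda>(r, s, u). (GR r s u * pd_r (ell N p t b) r s u + GS r s u * pd_s (ell N p t b) r s u
            + GT r s u * pd_t (ell N p t b) r s u) * ell N p t a r s u * Jac vx vy vz r s u) = I1 + I3"
  proof -
    have "integral ref_wedge (\<lambda>(r, s, u). (GR r s u * pd_r (ell N p t b) r s u + GS r s u * pd_s (ell N p t b) r s u
            + GT r s u * pd_t (ell N p t b) r s u) * ell N p t a r s u * Jac vx vy vz r s u)
      = integral ref_wedge (\<lambda>x. (\<lambda>(r, s, u). (lagr_tri N p i (r, s) * J0 (r, s) * A1 (r, s)) * (lagr_1d N t j u * lagr_1d N t j' u)) x
          + (\<lambda>(r, s, u). (lagr_tri N p i' (r, s) * lagr_tri N p i (r, s)) * (lagr_1d N t j u * (g u * pdj u))) x)"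
    proof (rule integral_cong3)
      fix r s u assume W: "(r, s, u) \<in> ref_wedge"
      have gr: "GR r s u = rx" and gs: "GS r s u = sx" and gt: "GT r s u * Jac vx vy vz r s u = g u"
        using hG[OF W] by (auto simp: g_def)
      have "(GR r s u * pd_r (ell N p t b) r s u + GS r s u * pd_s (ell N p t b) r s u
            + GT r s u * pd_t (ell N p t b) r s u) * ell N p t a r s u * Jac vx vy vz r s u
         = (rx * pd_r (ell N p t b) r s u + sx * pd_s (ell N p t b) r s u) * ell N p t a r s u * Jac vx vy vz r s u
           + (GT r s u * Jac vx vy vz r s u) * pd_t (ell N p t b) r s u * ell N p t a r s u"
        unfolding gr gs by (simp add: algebra_simps)
      also have "\<dots> = (rx * pd_r (ell N p t b) r s u + sx * pd_s (ell N p t b) r s u) * ell N p t a r s u * Jac vx vy vz r s u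
           + g u * pd_t (ell N p t b) r s u * ell N p t a r s u"
        unfolding gt ..
      also have "\<dots> = (lagr_tri N p i (r, s) * J0 (r, s) * A1 (r, s)) * (lagr_1d N t j u * lagr_1d N t j' u)
          + (lagr_tri N p i' (r, s) * lagr_tri N p i (r, s)) * (lagr_1d N t j u * (g u * pdj u))"
        unfolding pd_r_ell[OF uni] pd_s_ell[OF uni] pd_t_ell ell_eq Jac_eq q_def[symmetric]
          i_def[symmetric] j_def[symmetric] i'_def[symmetric] j'_def[symmetric]
        by (simp add: J0_def A1_def pdj_def algebra_simps)
      finally show "(\<lambda>(r, s, u). (GR r s u * pd_r (ell N p t b) r s u + GS r s u * pd_s (ell N p t b) r s u
            + GT r s u * pd_t (ell N p t b) r s u) * ell N p t a r s u * Jac vx vy vz r s u) (r, s, u)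
         = (\<lambda>x. (\<lambda>(r, s, u). (lagr_tri N p i (r, s) * J0 (r, s) * A1 (r, s)) * (lagr_1d N t j u * lagr_1d N t j' u)) x
          + (\<lambda>(r, s, u). (lagr_tri N p i' (r, s) * lagr_tri N p i (r, s)) * (lagr_1d N t j u * (g u * pdj u))) x) (r, s, u)"
        by simp
    qed
    also have "\<dots> = I1 + I3" unfolding I1_def I3_def by (rule integral_add[OF int1 int3])
    finally show ?thesis .
  qed
  have intc: "(\<lambda>y. (\<lambda>(r, s, u). ell N p t a r s u * ell N p t c r s u * Jac vx vy vz r s u) y * X c b) integrable_on ref_wedge" for c
  proof -
    have "(\<lambda>(r, s, u). (lagr_tri N p i (r, s) * lagr_tri N p (c div q) (r, s) * J0 (r, s) * X c b) * (lagr_1d N t j u * lagr_1d N t (c mod q) u)) integrable_on ref_wedge"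
      by (rule int_split[where F="\<lambda>x. lagr_tri N p i x * lagr_tri N p (c div q) x * J0 x * X c b" and G="\<lambda>u. lagr_1d N t j u * lagr_1d N t (c mod q) u", simplified])
         (use clt cJ0 cl1 in \<open>auto intro!: continuous_intros\<close>)
    moreover have "(\<lambda>(r, s, u). (lagr_tri N p i (r, s) * lagr_tri N p (c div q) (r, s) * J0 (r, s) * X c b) * (lagr_1d N t j u * lagr_1d N t (c mod q) u))
        = (\<lambda>y. (\<lambda>(r, s, u). ell N p t a r s u * ell N p t c r s u * Jac vx vy vz r s u) y * X c b)"
      by (auto simp: fun_eq_iff ell_eq Jac_eq J0_def i_def j_def)
    ultimately show ?thesis by simp
  qed
  have pw: "(\<Sum>c<Np N * (N+1). ell N p t c r s u * X c b) = A1 (r, s) * lagr_1d N t j' u + Ls (r, s) * (g u * pdj u)" for r s u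
    using pointwise[OF ij(4), where rx=rx and sx=sx and \<alpha>=\<alpha> and \<beta>=\<beta> and L=L and i'=i' and r=r and s=s and u=u] unfolding X_def A1_def Ls_def g_def pdj_def bsplit q_def by simp
  have RHS: "mmul (Np N * (N+1)) (mass_k N p t vx vy vz) X a b = I1 + I2"
  proof -
    have "mmul (Np N * (N+1)) (mass_k N p t vx vy vz) X a b
        = (\<Sum>c<Np N * (N+1). integral ref_wedge (\<lambda>y. (\<lambda>(r, s, u). ell N p t a r s u * ell N p t c r s u * Jac vx vy vz r s u) y * X c b))"
      by (simp add: mmul_def mass_k_def)
    also have "\<dots> = integral ref_wedge (\<lambda>y. \<Sum>c<Np N * (N+1). (\<lambda>(r, s, u). ell N p t a r s u * ell N p t c r s u * Jac vx vy vz r s u) y * X c b)"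
      by (rule integral_sum[symmetric]) (use intc in auto)
    also have "\<dots> = integral ref_wedge (\<lambda>x. (\<lambda>(r, s, u). (lagr_tri N p i (r, s) * J0 (r, s) * A1 (r, s)) * (lagr_1d N t j u * lagr_1d N t j' u)) x
          + (\<lambda>(r, s, u). (lagr_tri N p i (r, s) * J0 (r, s) * Ls (r, s)) * (lagr_1d N t j u * (g u * pdj u))) x)"
    proof (rule integral_cong3)
      fix r s u
      have "(\<Sum>c<Np N * (N+1). ell N p t a r s u * ell N p t c r s u * Jac vx vy vz r s u * X c b)
          = ell N p t a r s u * Jac vx vy vz r s u * (\<Sum>c<Np N * (N+1). ell N p t c r s u * X c b)"
        by (simp add: sum_distrib_left mult_ac)
      also have "\<dots> = ell N p t a r s u * Jac vx vy vz r s u * (A1 (r, s) * lagr_1d N t j' u + Ls (r, s) * (g u * pdj u))"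
        unfolding pw ..
      also have "\<dots> = (lagr_tri N p i (r, s) * J0 (r, s) * A1 (r, s)) * (lagr_1d N t j u * lagr_1d N t j' u)
          + (lagr_tri N p i (r, s) * J0 (r, s) * Ls (r, s)) * (lagr_1d N t j u * (g u * pdj u))"
        by (simp add: ell_eq Jac_eq J0_def i_def j_def algebra_simps)
      finally show "(\<lambda>y. \<Sum>c<Np N * (N+1). (\<lambda>(r, s, u). ell N p t a r s u * ell N p t c r s u * Jac vx vy vz r s u) y * X c b) (r, s, u)
          = (\<lambda>x. (\<lambda>(r, s, u). (lagr_tri N p i (r, s) * J0 (r, s) * A1 (r, s)) * (lagr_1d N t j u * lagr_1d N t j' u)) x
          + (\<lambda>(r, s, u). (lagr_tri N p i (r, s) * J0 (r, s) * Ls (r, s)) * (lagr_1d N t j u * (g u * pdj u))) x) (r, s, u)"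
        by simp
    qed
    also have "\<dots> = I1 + I2" unfolding I1_def I2_def by (rule integral_add[OF int1 int2])
    finally show ?thesis .
  qed
  have I23: "I2 = I3"
  proof -
    have cG: "continuous_on UNIV (\<lambda>u. lagr_1d N t j u * (g u * pdj u))"
      using cl1 cg cpdj by (intro continuous_intros) auto
    have s2: "I2 = integral ref_tri (\<lambda>x. lagr_tri N p i x * J0 x * Ls x) * integral {0..1} (\<lambda>u. lagr_1d N t j u * (g u * pdj u))"
      unfolding I2_def
      by (rule sep'[of "\<lambda>x. lagr_tri N p i x * J0 x * Ls x" "\<lambda>u. lagr_1d N t j u * (g u * pdj u)"])
         (use clt cJ0 cLs cG in \<open>auto intro!: continuous_intros\<close>)
    have s3: "I3 = integral ref_tri (\<lambda>x. lagr_tri N p i' x * lagr_tri N p i x) * integral {0..1} (\<lambda>u. lagr_1d N t j u * (g u * pdj u))"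
      unfolding I3_def
      by (rule sep'[of "\<lambda>x. lagr_tri N p i' x * lagr_tri N p i x" "\<lambda>u. lagr_1d N t j u * (g u * pdj u)"])
         (use clt cG in \<open>auto intro!: continuous_intros\<close>)
    have intk: "(\<lambda>x. lagr_tri N p i x * lagr_tri N p k x * J0 x * L k i') integrable_on ref_tri" for k
      by (rule cont_integrable[OF compact_ref_tri]) (use clt cJ0 in \<open>auto intro!: continuous_intros intro: continuous_on_subset\<close>)
    have "integral ref_tri (\<lambda>x. lagr_tri N p i x * J0 x * Ls x)
        = integral ref_tri (\<lambda>x. \<Sum>k<Np N. lagr_tri N p i x * lagr_tri N p k x * J0 x * L k i')"
      unfolding Ls_def by (simp add: sum_distrib_left mult_ac)
    also have "\<dots> = (\<Sum>k<Np N. integral ref_tri (\<lambda>x. lagr_tri N p i x * lagr_tri N p k x * J0 x * L k i'))"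
      by (rule integral_sum) (use intk in auto)
    also have "\<dots> = (\<Sum>k<Np N. mass_tri_k N p vx vy vz i k * L k i')"
    proof (rule sum.cong[OF refl])
      fix k
      have "(\<lambda>(r, s). lagr_tri N p i (r, s) * lagr_tri N p k (r, s) * Jac vx vy vz r s 0) = (\<lambda>x. lagr_tri N p i x * lagr_tri N p k x * J0 x)"
        by (auto simp: fun_eq_iff Jac_eq J0_def)
      then show "integral ref_tri (\<lambda>x. lagr_tri N p i x * lagr_tri N p k x * J0 x * L k i') = mass_tri_k N p vx vy vz i k * L k i'"
        unfolding mass_tri_k_def by simp
    qed
    also have "\<dots> = mass_tri_ref N p i i'" using hL[OF ij(1,2)] by (simp add: mmul_def)
    also have "\<dots> = integral ref_tri (\<lambda>x. lagr_tri N p i' x * lagr_tri N p i x)"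
    proof -
      have "(\<lambda>(r, s). lagr_tri N p i (r, s) * lagr_tri N p i' (r, s)) = (\<lambda>x. lagr_tri N p i' x * lagr_tri N p i x)"
        by (auto simp: fun_eq_iff)
      then show ?thesis unfolding mass_tri_ref_def by simp
    qed
    finally show ?thesis using s2 s3 by simp
  qed
  show ?thesis using LHS RHS I23 by simp
qed

lemma main_gen:
  fixes GR GS GT :: "real \<Rightarrow> real \<Rightarrow> real \<Rightarrow> real" and rx sx \<alpha> \<beta> :: real and g :: "real \<Rightarrow> real"
  assumes hG: "\<And>r s u. (r, s, u) \<in> ref_wedge \<Longrightarrow> GR r s u = rx \<and> GS r s u = sx \<and> GT r s u * Jac vx vy vz r s u = \<alpha> + \<beta> * u"
    and hg: "\<And>u. g u = \<alpha> + \<beta> * u"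
    and a: "a < Np N * (N+1)" and b: "b < Np N * (N+1)"
  shows "mmul (Np N * (N+1)) (minv (Np N * (N+1)) (mass_k N p t vx vy vz))
      (\<lambda>a b. integral ref_wedge (\<lambda>(r, s, u). (GR r s u * pd_r (ell N p t b) r s u + GS r s u * pd_s (ell N p t b) r s u
            + GT r s u * pd_t (ell N p t b) r s u) * ell N p t a r s u * Jac vx vy vz r s u)) a b
    = kron (N + 1) (\<lambda>i i'. rx * Dr_tri N p i i' + sx * Ds_tri N p i i') idm a b
      + kron (N + 1) (mmul (Np N) (minv (Np N) (mass_tri_k N p vx vy vz)) (mass_tri_ref N p))
          (mmul (N + 1) (diagm (\<lambda>j. g (t j))) (Dt_1d N t)) a b"
proof -
  define n where "n = Np N * (N+1)"
  define M where "M = mass_k N p t vx vy vz"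
  define Mt where "Mt = mass_tri_k N p vx vy vz"
  define L where "L = mmul (Np N) (minv (Np N) Mt) (mass_tri_ref N p)"
  define X where "X = (\<lambda>a b. kron (N+1) (\<lambda>i i'. rx * Dr_tri N p i i' + sx * Ds_tri N p i i') idm a b
       + kron (N+1) L (mmul (N+1) (diagm (\<lambda>j. \<alpha> + \<beta> * t j)) (Dt_1d N t)) a b)"
  define S where "S = (\<lambda>a b. integral ref_wedge (\<lambda>(r, s, u). (GR r s u * pd_r (ell N p t b) r s u + GS r s u * pd_s (ell N p t b) r s u
            + GT r s u * pd_t (ell N p t b) r s u) * ell N p t a r s u * Jac vx vy vz r s u))"
  have hL: "mmul (Np N) Mt L i i' = mass_tri_ref N p i i'" if "i < Np N" "i' < Np N" for i i'
  proof -
    have inv: "is_inv (Np N) Mt (minv (Np N) Mt)" unfolding Mt_def by (rule Mt_inv)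
    have "mmul (Np N) Mt L i i' = mmul (Np N) (mmul (Np N) Mt (minv (Np N) Mt)) (mass_tri_ref N p) i i'"
      unfolding L_def by (rule mmul_assoc)
    also have "\<dots> = (\<Sum>c<Np N. idm i c * mass_tri_ref N p c i')"
      unfolding mmul_def[of "Np N" "mmul (Np N) Mt (minv (Np N) Mt)"]
      using inv that by (intro sum.cong refl) (simp add: is_inv_def)
    also have "\<dots> = mass_tri_ref N p i i'" using that(1) by (rule sum_idm_left)
    finally show ?thesis .
  qed
  have core': "S c b = mmul n M X c b" if "c < n" for c
    unfolding S_def M_def X_def n_def L_def
    by (rule core[OF hG _ that[unfolded n_def] b]) (use hL in \<open>auto simp: Mt_def L_def\<close>)
  have inv: "is_inv n M (minv n M)" unfolding n_def M_def by (rule M_inv)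
  have "mmul n (minv n M) S a b = mmul n (minv n M) (mmul n M X) a b"
    unfolding mmul_def[of n "minv n M"] using core' by (intro sum.cong refl) auto
  also have "\<dots> = mmul n (mmul n (minv n M) M) X a b" by (rule mmul_assoc)
  also have "\<dots> = (\<Sum>c<n. idm a c * X c b)"
    unfolding mmul_def[of n "mmul n (minv n M) M"]
    using inv a by (intro sum.cong refl) (simp add: is_inv_def n_def)
  also have "\<dots> = X a b" using a by (intro sum_idm_left) (simp add: n_def)
  finally have "mmul n (minv n M) S a b = X a b" .
  moreover have "(\<lambda>j. g (t j)) = (\<lambda>j. \<alpha> + \<beta> * t j)" by (simp add: hg)
  ultimately show ?thesis unfolding n_def M_def S_def X_def L_def Mt_def by simp
qed

end
theorem mainTheorem5:
  fixes N :: nat and p :: "nat \<Rightarrow> real \<times> real" and t :: "nat \<Rightarrow> real"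
    and vx vy vz :: "nat \<Rightarrow> real"
  assumes "1 \<le> N"
    and "\<forall>i<Np N. p i \<in> ref_tri"
    and "unisolvent N p"
    and "gll_nodes N t"
    and "vertically_mapped vx vy"
    and "\<forall>(r, s, u)\<in>ref_wedge. Jac vx vy vz r s u > 0"
  shows "\<exists>rx sx ry sy :: real. \<exists>gx gy :: real \<Rightarrow> real.
    (\<forall>(r, s, u)\<in>ref_wedge.
        geo_rx vx vy vz r s u = rx \<and> geo_sx vx vy vz r s u = sx
      \<and> geo_ry vx vy vz r s u = ry \<and> geo_sy vx vy vz r s u = sy
      \<and> geo_tx vx vy vz r s u * Jac vx vy vz r s u = gx u
      \<and> geo_ty vx vy vz r s u * Jac vx vy vz r s u = gy u)
    \<and> (let n = Np N * (N + 1);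
           M = mass_k N p t vx vy vz;
           L = mmul (Np N) (minv (Np N) (mass_tri_k N p vx vy vz)) (mass_tri_ref N p);
           Dx = mmul n (minv n M) (Sx_k N p t vx vy vz);
           Dy = mmul n (minv n M) (Sy_k N p t vx vy vz)
       in (\<forall>a<n. \<forall>b<n.
             Dx a b = kron (N + 1) (\<lambda>i i'. rx * Dr_tri N p i i' + sx * Ds_tri N p i i') idm a b
                    + kron (N + 1) L (mmul (N + 1) (diagm (\<lambda>j. gx (t j))) (Dt_1d N t)) a b)
        \<and> (\<forall>a<n. \<forall>b<n.
             Dy a b = kron (N + 1) (\<lambda>i i'. ry * Dr_tri N p i i' + sy * Ds_tri N p i i') idm a b
                    + kron (N + 1) L (mmul (N + 1) (diagm (\<lambda>j. gy (t j))) (Dt_1d N t)) a b))"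

proof -
  note ctx = assms(1-6)
  define rx where "rx = (vy 3 - vy 1) / Dxy vx vy"
  define sx where "sx = - (vy 2 - vy 1) / Dxy vx vy"
  define ry where "ry = - (vx 3 - vx 1) / Dxy vx vy"
  define sy where "sy = (vx 2 - vx 1) / Dxy vx vy"
  define gx where "gx u = (vy 2 - vy 1) * zs vz u - (vy 3 - vy 1) * zr vz u" for u
  define gy where "gy u = (vx 3 - vx 1) * zr vz u - (vx 2 - vx 1) * zs vz u" for u
  have Dnz: "Dxy vx vy \<noteq> 0" by (rule Dxy_nz[OF ctx])
  have geo: "geo_rx vx vy vz r s u = rx \<and> geo_sx vx vy vz r s u = sx
      \<and> geo_ry vx vy vz r s u = ry \<and> geo_sy vx vy vz r s u = sy
      \<and> geo_tx vx vy vz r s u * Jac vx vy vz r s u = gx u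
      \<and> geo_ty vx vy vz r s u * Jac vx vy vz r s u = gy u" if W: "(r, s, u) \<in> ref_wedge" for r s u
    using geo_vm[OF assms(5) Dnz zt_nz[OF ctx W]]
    by (simp add: rx_def sx_def ry_def sy_def gx_def gy_def)
  have gxl: "gx u = gx 0 + (gx 1 - gx 0) * u" for u by (simp add: gx_def zr_def zs_def algebra_simps)
  have gyl: "gy u = gy 0 + (gy 1 - gy 0) * u" for u by (simp add: gy_def zr_def zs_def algebra_simps)
  have DX: "mmul (Np N * (N + 1)) (minv (Np N * (N + 1)) (mass_k N p t vx vy vz)) (Sx_k N p t vx vy vz) a b
     = kron (N + 1) (\<lambda>i i'. rx * Dr_tri N p i i' + sx * Ds_tri N p i i') idm a b
      + kron (N + 1) (mmul (Np N) (minv (Np N) (mass_tri_k N p vx vy vz)) (mass_tri_ref N p))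
          (mmul (N + 1) (diagm (\<lambda>j. gx (t j))) (Dt_1d N t)) a b"
    if "a < Np N * (N + 1)" "b < Np N * (N + 1)" for a b
    unfolding Sx_k_def
    by (rule main_gen[OF ctx _ gxl that]) (use geo gxl in metis)
  have DY: "mmul (Np N * (N + 1)) (minv (Np N * (N + 1)) (mass_k N p t vx vy vz)) (Sy_k N p t vx vy vz) a b
     = kron (N + 1) (\<lambda>i i'. ry * Dr_tri N p i i' + sy * Ds_tri N p i i') idm a b
      + kron (N + 1) (mmul (Np N) (minv (Np N) (mass_tri_k N p vx vy vz)) (mass_tri_ref N p))
          (mmul (N + 1) (diagm (\<lambda>j. gy (t j))) (Dt_1d N t)) a b"
    if "a < Np N * (N + 1)" "b < Np N * (N + 1)" for a b
    unfolding Sy_k_def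
    by (rule main_gen[OF ctx _ gyl that]) (use geo gyl in metis)
  show ?thesis
    apply (rule exI[of _ rx], rule exI[of _ sx], rule exI[of _ ry], rule exI[of _ sy], rule exI[of _ gx], rule exI[of _ gy])
    unfolding Let_def using geo DX DY by blast
qed

end
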